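(* Let $G$ be an edge-colored graph. The following are equivalent: (1) $G$ is PC acyclic of type 5; (2) the orientation procedure described below completes without a conflict and the resulting digraph is acyclic; (3) every vertex of $G$ is incident to edges of at most two colors, and every cycle $C$ in $G$ has a positive even number of $C$-monochromatic vertices.
   Context: An edge-colored graph is a finite undirected graph in which every edge is assigned a color. An ordering $v_1,\dots,v_n$ of $V(G)$ is of type 5 if for every $i\in[n]$, all edges from $v_i$ to $\{v_{i+1},\dots,v_n\}$ have the same color, all edges from $v_i$ to $\{v_1,\dots,v_{i-1}\}$ have the same color, and these two colors are different. $G$ is PC acyclic of type 5 if it has an ordering of its vertices of type 5. For a cycle $C$ in $G$, a vertex of $C$ is $C$-monochromatic if its two incident edges on $C$ have the same color. The orientation procedure: first check that each vertex is incident to edges of at most two colors (otherwise the procedure fails). Choose an arbitrary vertex $x$ (in each connected component) and orient the edges of one color incident to $x$ out of $x$ and the edges of the other color towards $x$. Then repeatedly, for every unmarked vertex $y$ that has an arc into it (respectively out of it) coming from an edge of color $i$, mark $y$ and orient all edges of color $i$ incident to $y$ towards $y$ (respectively out of $y$) and all other edges incident to $y$ out of $y$ (respectively towards $y$). The procedure stops with a conflict if orienting the edges incident to some $y$ causes some other vertex $z$ to (a) have two arcs of different colors oriented into it or two arcs of different colors oriented out of it, or (b) have an arc into it and an arc out of it of the same color. It completes if all edges are oriented without such a conflict. *)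

theory Defs
  imports Main
begin

definition ecgraph :: "'a set \<Rightarrow> 'a set set \<Rightarrow> bool" where
  "ecgraph V E \<longleftrightarrow> finite V \<and>
     (\<forall>e\<in>E. \<exists>u v. u \<noteq> v \<and> u \<in> V \<and> v \<in> V \<and> e = {u, v})"

definition colors_at :: "'a set set \<Rightarrow> ('a set \<Rightarrow> 'c) \<Rightarrow> 'a \<Rightarrow> 'c set" where
  "colors_at E col v = col ` {e \<in> E. v \<in> e}"

definition type5_ordering ::
  "'a set \<Rightarrow> 'a set set \<Rightarrow> ('a set \<Rightarrow> 'c) \<Rightarrow> 'a list \<Rightarrow> bool" where
  "type5_ordering V E col vs \<longleftrightarrow> distinct vs \<and> set vs = V \<and>
     (\<forall>i<length vs. \<forall>j<length vs. \<forall>k<length vs.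
        ((i < j \<and> i < k \<and> {vs!i, vs!j} \<in> E \<and> {vs!i, vs!k} \<in> E)
            \<longrightarrow> col {vs!i, vs!j} = col {vs!i, vs!k}) \<and>
        ((j < i \<and> k < i \<and> {vs!i, vs!j} \<in> E \<and> {vs!i, vs!k} \<in> E)
            \<longrightarrow> col {vs!i, vs!j} = col {vs!i, vs!k}) \<and>
        ((j < i \<and> i < k \<and> {vs!i, vs!j} \<in> E \<and> {vs!i, vs!k} \<in> E)
            \<longrightarrow> col {vs!i, vs!j} \<noteq> col {vs!i, vs!k}))"

definition pc_acyclic_type5 :: "'a set \<Rightarrow> 'a set set \<Rightarrow> ('a set \<Rightarrow> 'c) \<Rightarrow> bool" where
  "pc_acyclic_type5 V E col \<longleftrightarrow> (\<exists>vs. type5_ordering V E col vs)"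

definition is_cycle :: "'a set \<Rightarrow> 'a set set \<Rightarrow> 'a list \<Rightarrow> bool" where
  "is_cycle V E cs \<longleftrightarrow> length cs \<ge> 3 \<and> distinct cs \<and> set cs \<subseteq> V \<and>
     (\<forall>i<length cs. {cs!i, cs!((i + 1) mod length cs)} \<in> E)"

definition cycle_mono :: "('a set \<Rightarrow> 'c) \<Rightarrow> 'a list \<Rightarrow> nat \<Rightarrow> bool" where
  "cycle_mono col cs i \<longleftrightarrow>
     (let n = length cs in
       col {cs!((i + n - 1) mod n), cs!i} = col {cs!i, cs!((i + 1) mod n)})"

definition num_mono :: "('a set \<Rightarrow> 'c) \<Rightarrow> 'a list \<Rightarrow> nat" where
  "num_mono col cs = card {i. i < length cs \<and> cycle_mono col cs i}"

definition cond3 :: "'a set \<Rightarrow> 'a set set \<Rightarrow> ('a set \<Rightarrow> 'c) \<Rightarrow> bool" where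
  "cond3 V E col \<longleftrightarrow> (\<forall>v\<in>V. card (colors_at E col v) \<le> 2) \<and>
     (\<forall>cs. is_cycle V E cs \<longrightarrow> 0 < num_mono col cs \<and> even (num_mono col cs))"

text \<open>A state is (M, Arcs): the set of marked vertices and the set of arcs oriented so far.
orient_at E col y a out Arcs re-orients all edges at y: if out, edges of colour a leave y and
all other edges at y enter y; otherwise edges of colour a enter y and all others leave y.\<close>

definition orient_at ::
  "'a set set \<Rightarrow> ('a set \<Rightarrow> 'c) \<Rightarrow> 'a \<Rightarrow> 'c \<Rightarrow> bool \<Rightarrow> ('a \<times> 'a) set \<Rightarrow> ('a \<times> 'a) set" where
  "orient_at E col y a out Arcs =
     {(u, w) \<in> Arcs. u \<noteq> y \<and> w \<noteq> y}
     \<union> {(y, w) | w. {y, w} \<in> E \<and> (col {y, w} = a) = out}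
     \<union> {(w, y) | w. {y, w} \<in> E \<and> (col {y, w} = a) \<noteq> out}"

definition conflict :: "('a set \<Rightarrow> 'c) \<Rightarrow> ('a \<times> 'a) set \<Rightarrow> bool" where
  "conflict col Arcs \<longleftrightarrow> (\<exists>z u w.
      ((u, z) \<in> Arcs \<and> (w, z) \<in> Arcs \<and> col {u, z} \<noteq> col {w, z}) \<or>
      ((z, u) \<in> Arcs \<and> (z, w) \<in> Arcs \<and> col {z, u} \<noteq> col {z, w}) \<or>
      ((u, z) \<in> Arcs \<and> (z, w) \<in> Arcs \<and> col {u, z} = col {z, w}))"

definition adjrel :: "'a set set \<Rightarrow> ('a \<times> 'a) set" where
  "adjrel E = {(u, v). {u, v} \<in> E}"

text \<open>States reachable by (partial) runs of the procedure; steps are only taken from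
conflict-free states (the procedure stops at a conflict).\<close>

inductive orient_reach ::
  "'a set \<Rightarrow> 'a set set \<Rightarrow> ('a set \<Rightarrow> 'c) \<Rightarrow> 'a set \<times> ('a \<times> 'a) set \<Rightarrow> bool"
  for V E col where
  init: "orient_reach V E col ({}, {})"
| start: "\<lbrakk> orient_reach V E col (M, Arcs); \<not> conflict col Arcs; x \<in> V; x \<notin> M;
            \<forall>v. (x, v) \<in> (adjrel E)\<^sup>* \<longrightarrow> v \<notin> M;
            a \<in> colors_at E col x \<or> colors_at E col x = {} \<rbrakk>
         \<Longrightarrow> orient_reach V E col (insert x M, orient_at E col x a out Arcs)"
| prop_in: "\<lbrakk> orient_reach V E col (M, Arcs); \<not> conflict col Arcs; y \<in> V; y \<notin> M; (z, y) \<in> Arcs \<rbrakk>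
         \<Longrightarrow> orient_reach V E col (insert y M, orient_at E col y (col {z, y}) False Arcs)"
| prop_out: "\<lbrakk> orient_reach V E col (M, Arcs); \<not> conflict col Arcs; y \<in> V; y \<notin> M; (y, z) \<in> Arcs \<rbrakk>
         \<Longrightarrow> orient_reach V E col (insert y M, orient_at E col y (col {y, z}) True Arcs)"

definition all_oriented :: "'a set set \<Rightarrow> ('a \<times> 'a) set \<Rightarrow> bool" where
  "all_oriented E Arcs \<longleftrightarrow> (\<forall>e\<in>E. \<exists>u w. e = {u, w} \<and> (u, w) \<in> Arcs)"

text \<open>Condition (2), reading "arbitrary choices" existentially: some run of the procedure
passes the colour check and completes without conflict with an acyclic digraph.\<close>

definition proc_ok_some :: "'a set \<Rightarrow> 'a set set \<Rightarrow> ('a set \<Rightarrow> 'c) \<Rightarrow> bool" where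
  "proc_ok_some V E col \<longleftrightarrow> (\<forall>v\<in>V. card (colors_at E col v) \<le> 2) \<and>
     (\<exists>M Arcs. orient_reach V E col (M, Arcs) \<and> \<not> conflict col Arcs \<and> all_oriented E Arcs \<and> acyclic Arcs)"

text \<open>Condition (2), reading "arbitrary choices" universally: every run passes the colour
check, never reaches a conflict, and every completed run yields an acyclic digraph
(and a completed run exists).\<close>

definition proc_ok_all :: "'a set \<Rightarrow> 'a set set \<Rightarrow> ('a set \<Rightarrow> 'c) \<Rightarrow> bool" where
  "proc_ok_all V E col \<longleftrightarrow> (\<forall>v\<in>V. card (colors_at E col v) \<le> 2) \<and>
     (\<forall>M Arcs. orient_reach V E col (M, Arcs) \<longrightarrow> \<not> conflict col Arcs) \<and>
     (\<forall>M Arcs. orient_reach V E col (M, Arcs) \<and> all_oriented E Arcs \<longrightarrow> acyclic Arcs) \<and>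
     (\<exists>M Arcs. orient_reach V E col (M, Arcs) \<and> all_oriented E Arcs)"

end

theory Submission
  imports Defs
begin

definition arcs_on :: "'a set set \<Rightarrow> ('a \<times> 'a) set \<Rightarrow> bool" where
  "arcs_on E A \<longleftrightarrow> (\<forall>x y. (x,y)\<in>A \<longrightarrow> {x,y}\<in>E)"
definition full :: "'a set set \<Rightarrow> ('a \<times> 'a) set \<Rightarrow> bool" where
  "full E A \<longleftrightarrow> (\<forall>x y. {x,y}\<in>E \<longrightarrow> (x,y)\<in>A \<or> (y,x)\<in>A)"

lemma col_sym: "col {x,y} = col {y,x}" by (simp add: insert_commute)

lemma no_both: "\<not> conflict col A \<Longrightarrow> (x,w)\<in>A \<Longrightarrow> (w,x)\<in>A \<Longrightarrow> False"
proof -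
  assume a: "\<not> conflict col A" "(x,w)\<in>A" "(w,x)\<in>A"
  have "col{w,x} = col{x,w}" by (simp add: insert_commute)
  then have "conflict col A" unfolding conflict_def using a(2,3) by blast
  then show False using a(1) by blast
qed

lemma dir_at:
  assumes "\<not> conflict col A" "(x,w)\<in>A \<or> (w,x)\<in>A" "(x,w')\<in>A \<or> (w',x)\<in>A"
  shows "(((x,w)\<in>A) = ((x,w')\<in>A)) = (col{x,w} = col{x,w'})"
  using assms unfolding conflict_def
  by (smt (verit) insert_commute)

lemma pc_at:
  assumes "\<not> conflict col A" "(a,z)\<in>A \<or> (z,a)\<in>A" "(z,b)\<in>A \<or> (b,z)\<in>A"
  shows "(col{a,z} = col{z,b}) = (((a,z)\<in>A) \<noteq> ((z,b)\<in>A))"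
proof -
  have "(((z,a)\<in>A) = ((z,b)\<in>A)) = (col{z,a} = col{z,b})"
    using dir_at[OF assms(1)] assms(2,3) by blast
  moreover have "(a,z)\<in>A \<longleftrightarrow> (z,a)\<notin>A" using assms(2) no_both[OF assms(1)] by blast
  ultimately show ?thesis by (auto simp: insert_commute)
qed

definition outok :: "('a set \<Rightarrow> 'c) \<Rightarrow> ('a\<times>'a) set \<Rightarrow> 'a \<Rightarrow> 'c \<Rightarrow> bool" where
  "outok col A x c \<longleftrightarrow> (\<forall>w. ((x,w)\<in>A \<longrightarrow> col{x,w} = c) \<and> ((w,x)\<in>A \<longrightarrow> col{w,x} \<noteq> c))"
definition inok :: "('a set \<Rightarrow> 'c) \<Rightarrow> ('a\<times>'a) set \<Rightarrow> 'a \<Rightarrow> 'c \<Rightarrow> bool" where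
  "inok col A x c \<longleftrightarrow> (\<forall>w. ((w,x)\<in>A \<longrightarrow> col{w,x} = c) \<and> ((x,w)\<in>A \<longrightarrow> col{x,w} \<noteq> c))"


lemma add_arc:
  assumes nc: "\<not> conflict col A" and o: "outok col A u (col{u,v})" and i: "inok col A v (col{u,v})" and "u \<noteq> v"
  shows "\<not> conflict col (insert (u,v) A)"
proof
  assume "conflict col (insert (u,v) A)"
  then obtain z a b where
    h: "((a, z) \<in> insert (u,v) A \<and> (b, z) \<in> insert (u,v) A \<and> col {a, z} \<noteq> col {b, z}) \<or>
      ((z, a) \<in> insert (u,v) A \<and> (z, b) \<in> insert (u,v) A \<and> col {z, a} \<noteq> col {z, b}) \<or>
      ((a, z) \<in> insert (u,v) A \<and> (z, b) \<in> insert (u,v) A \<and> col {a, z} = col {z, b})"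
    unfolding conflict_def by blast
  have o1: "\<And>w. (u,w)\<in>A \<Longrightarrow> col{u,w} = col{u,v}" and o2: "\<And>w. (w,u)\<in>A \<Longrightarrow> col{w,u} \<noteq> col{u,v}"
    using o unfolding outok_def by auto
  have i1: "\<And>w. (w,v)\<in>A \<Longrightarrow> col{w,v} = col{u,v}" and i2: "\<And>w. (v,w)\<in>A \<Longrightarrow> col{v,w} \<noteq> col{u,v}"
    using i unfolding inok_def by auto
  have nc': "\<And>z a b. \<not>(((a, z) \<in> A \<and> (b, z) \<in> A \<and> col {a, z} \<noteq> col {b, z}) \<or>
      ((z, a) \<in> A \<and> (z, b) \<in> A \<and> col {z, a} \<noteq> col {z, b}) \<or>
      ((a, z) \<in> A \<and> (z, b) \<in> A \<and> col {a, z} = col {z, b}))"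
    using nc unfolding conflict_def by blast
  have cs: "\<And>x y. col{x,y} = col{y,x}" by (simp add: insert_commute)
  from h show False
  proof (elim disjE conjE)
    assume a1: "(a, z) \<in> insert (u,v) A" and a2: "(b, z) \<in> insert (u,v) A" and a3: "col {a, z} \<noteq> col {b, z}"
    show False
    proof (cases "(a,z) = (u,v)")
      case True
      then have az: "a = u" "z = v" by auto
      show False
      proof (cases "(b,z) = (u,v)")
        case True then show False using az a3 by auto
      next
        case False then have "(b,v) \<in> A" using a2 az by auto
        then show False using i1[of b] a3 az by simp
      qed
    next
      case False then have aA: "(a,z) \<in> A" using a1 by auto
      show False
      proof (cases "(b,z) = (u,v)")
        case True then have "b = u" "z = v" by auto
        then show False using i1[of a] aA a3 by simp
      next
        case False then have "(b,z) \<in> A" using a2 by auto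
        then show False using nc'[of a z b] aA a3 by blast
      qed
    qed
  next
    assume a1: "(z, a) \<in> insert (u,v) A" and a2: "(z, b) \<in> insert (u,v) A" and a3: "col {z, a} \<noteq> col {z, b}"
    show False
    proof (cases "(z,a) = (u,v)")
      case True
      then have az: "z = u" "a = v" by auto
      show False
      proof (cases "(z,b) = (u,v)")
        case True then show False using az a3 by auto
      next
        case False then have "(u,b) \<in> A" using a2 az by auto
        then show False using o1[of b] a3 az by simp
      qed
    next
      case False then have aA: "(z,a) \<in> A" using a1 by auto
      show False
      proof (cases "(z,b) = (u,v)")
        case True then have "z = u" "b = v" by auto
        then show False using o1[of a] aA a3 by simp
      next
        case False then have "(z,b) \<in> A" using a2 by auto
        then show False using nc'[of a z b] aA a3 by blast
      qed
    qed
  next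
    assume a1: "(a, z) \<in> insert (u,v) A" and a2: "(z, b) \<in> insert (u,v) A" and a3: "col {a, z} = col {z, b}"
    show False
    proof (cases "(a,z) = (u,v)")
      case True
      then have az: "a = u" "z = v" by auto
      show False
      proof (cases "(z,b) = (u,v)")
        case True then show False using az \<open>u\<noteq>v\<close> by auto
      next
        case False then have "(v,b) \<in> A" using a2 az by auto
        then show False using i2[of b] a3 az by simp
      qed
    next
      case False then have aA: "(a,z) \<in> A" using a1 by auto
      show False
      proof (cases "(z,b) = (u,v)")
        case True then have zb: "z = u" "b = v" by auto
        have "col {a,u} = col{u,a}" by (rule cs)
        then show False using o2[of a] aA a3 zb by simp
      next
        case False then have "(z,b) \<in> A" using a2 by auto
        then show False using nc'[of a z b] aA a3 by blast
      qed
    qed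
  qed
qed

lemma prev_eq: "i < (n::nat) \<Longrightarrow> (i + n - 1) mod n = (if i = 0 then n - 1 else i - 1)"
proof (cases "i = 0")
  case True assume "i<n" with True show ?thesis by (cases n) auto
next
  case False assume "i<n"
  then have "i + n - 1 = (i - 1) + n" using False by simp
  then have "(i + n - 1) mod n = ((i - 1) + n) mod n" by (simp only:)
  also have "\<dots> = (i - 1) mod n" by (rule mod_add_self2)
  also have "\<dots> = i - 1" using \<open>i<n\<close> by simp
  finally show ?thesis using False by simp
qed

lemma next_prev: "i < (n::nat) \<Longrightarrow> ((i + n - 1) mod n + 1) mod n = i"
  using prev_eq[of i n] by (cases "i = 0") auto

lemma prev_bij: "bij_betw (\<lambda>i. if i = 0 then n - 1 else i - 1) {..<n} {..<(n::nat)}"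
proof (rule bij_betw_imageI)
  show "inj_on (\<lambda>i. if i = 0 then n - 1 else i - 1) {..<n}"
    by (auto simp: inj_on_def split: if_splits)
  show "(\<lambda>i. if i = 0 then n - 1 else i - 1) ` {..<n} = {..<n}"
  proof
    show "(\<lambda>i. if i = 0 then n - 1 else i - 1) ` {..<n} \<subseteq> {..<n}" by auto
    show "{..<n} \<subseteq> (\<lambda>i. if i = 0 then n - 1 else i - 1) ` {..<n}"
    proof
      fix j assume "j \<in> {..<n}"
      show "j \<in> (\<lambda>i. if i = 0 then n - 1 else i - 1) ` {..<n}"
      proof (cases "j = n - 1")
        case True then show ?thesis using \<open>j \<in> {..<n}\<close> by (auto intro!: image_eqI[where x=0])
      next
        case False then show ?thesis using \<open>j \<in> {..<n}\<close> by (auto intro!: image_eqI[where x="j+1"])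
      qed
    qed
  qed
qed

lemma cyc_even:
  fixes g :: "nat \<Rightarrow> bool"
  shows "even (card {i. i<n \<and> g ((i+n-1) mod n) \<noteq> g i})"
proof -
  define p where "p = (\<lambda>i. if i = 0 then n - 1 else i - (1::nat))"
  have S: "{i. i<n \<and> g ((i+n-1) mod n) \<noteq> g i} = {..<n} \<inter> {i. g (p i) \<noteq> g i}"
  proof -
    have "\<And>x. x < n \<Longrightarrow> (x+n-1) mod n = p x" using prev_eq unfolding p_def by blast
    then show ?thesis by auto
  qed
  have "int (card ({..<n} \<inter> {i. g (p i) \<noteq> g i})) = (\<Sum>i<n. of_bool (g (p i) \<noteq> g i))"
    by simp
  also have "\<dots> = (\<Sum>i<n. of_bool (g (p i)) + of_bool (g i) - 2 * (of_bool (g (p i)) * of_bool (g i)))"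
    by (rule sum.cong) auto
  also have "\<dots> = (\<Sum>i<n. of_bool (g (p i))) + (\<Sum>i<n. of_bool (g i)) - 2 * (\<Sum>i<n. (of_bool (g (p i)) * of_bool (g i)::int))"
    by (simp only: sum.distrib sum_subtractf sum_distrib_left)
  also have "(\<Sum>i<n. of_bool (g (p i))::int) = (\<Sum>i<n. of_bool (g i))"
    using sum.reindex_bij_betw[OF prev_bij[of n], of "\<lambda>i. of_bool (g i)::int"] by (simp add: p_def)
  finally have "int (card ({..<n} \<inter> {i. g (p i) \<noteq> g i})) = 2 * ((\<Sum>i<n. of_bool (g i)) - (\<Sum>i<n. (of_bool (g (p i)) * of_bool (g i)::int)))"
    by simp
  then have "even (int (card ({..<n} \<inter> {i. g (p i) \<noteq> g i})))" by simp
  then show ?thesis using S by simp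
qed


definition gdir :: "('a\<times>'a) set \<Rightarrow> 'a list \<Rightarrow> nat \<Rightarrow> bool" where
  "gdir B cs j \<longleftrightarrow> (cs!j, cs!((j+1) mod length cs)) \<in> B"
definition chg :: "('a\<times>'a) set \<Rightarrow> 'a list \<Rightarrow> nat \<Rightarrow> bool" where
  "chg B cs i \<longleftrightarrow> gdir B cs ((i + length cs - 1) mod length cs) \<noteq> gdir B cs i"

lemma chg_alt: "i < length cs \<Longrightarrow> chg B cs i \<longleftrightarrow>
   ((cs!((i + length cs - 1) mod length cs), cs!i) \<in> B) \<noteq> ((cs!i, cs!((i+1) mod length cs)) \<in> B)"
  by (simp only: chg_def gdir_def next_prev)

lemma chg_even: "even (card {i. i < length cs \<and> chg B cs i})"
  unfolding chg_def using cyc_even[of "length cs" "gdir B cs"] by simp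

lemma parity_one:
  assumes "\<And>i. i < length cs \<Longrightarrow> i \<noteq> k \<Longrightarrow> cycle_mono col cs i = chg B cs i"
    and "k < length cs" and "even (num_mono col cs)"
  shows "cycle_mono col cs k = chg B cs k"
proof (rule ccontr)
  assume ne: "cycle_mono col cs k \<noteq> chg B cs k"
  define M where "M = {i. i < length cs \<and> cycle_mono col cs i}"
  define C where "C = {i. i < length cs \<and> chg B cs i}"
  have fM: "finite M" and fC: "finite C" unfolding M_def C_def by auto
  have eM: "even (card M)" using assms(3) unfolding num_mono_def M_def by simp
  have eC: "even (card C)" unfolding C_def by (rule chg_even)
  show False
  proof (cases "cycle_mono col cs k")
    case True
    then have "M = insert k C" "k \<notin> C" using ne assms(1,2) unfolding M_def C_def by auto
    then have "card M = Suc (card C)" using fC by simp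
    then show False using eM eC by simp
  next
    case False
    then have "C = insert k M" "k \<notin> M" using ne assms(1,2) unfolding M_def C_def by auto
    then have "card C = Suc (card M)" using fM by simp
    then show False using eM eC by simp
  qed
qed

lemma cycle_mono_alt: "i < length cs \<Longrightarrow> cycle_mono col cs i \<longleftrightarrow>
   col {cs!((i + length cs - 1) mod length cs), cs!i} = col {cs!i, cs!((i+1) mod length cs)}"
  unfolding cycle_mono_def Let_def by simp

lemma mono_chg_local:
  assumes "\<not> conflict col B" "i < length cs"
    "(cs!((i + length cs - 1) mod length cs), cs!i) \<in> B \<or> (cs!i, cs!((i + length cs - 1) mod length cs)) \<in> B"
    "(cs!i, cs!((i+1) mod length cs)) \<in> B \<or> (cs!((i+1) mod length cs), cs!i) \<in> B"
  shows "cycle_mono col cs i = chg B cs i"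
  unfolding cycle_mono_alt[OF assms(2)] chg_alt[OF assms(2)]
  by (rule pc_at[OF assms(1,3,4)])

lemma cyc_trancl:
  assumes n0: "0 < length cs" and st: "\<forall>i<length cs. (cs!i, cs!((i+1) mod length cs)) \<in> R"
  shows "(cs!0, cs!0) \<in> R\<^sup>+"
proof -
  let ?n = "length cs"
  have step: "\<And>i. (cs!(i mod ?n), cs!(Suc i mod ?n)) \<in> R"
  proof -
    fix i
    have "i mod ?n < ?n" using n0 by simp
    then have "(cs!(i mod ?n), cs!((i mod ?n + 1) mod ?n)) \<in> R" using st by blast
    moreover have "(i mod ?n + 1) mod ?n = Suc i mod ?n" by (metis Suc_eq_plus1 mod_Suc_eq)
    ultimately show "(cs!(i mod ?n), cs!(Suc i mod ?n)) \<in> R" by simp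
  qed
  have main: "\<And>j. (cs!0, cs!(Suc j mod ?n)) \<in> R\<^sup>+"
  proof -
    fix j show "(cs!0, cs!(Suc j mod ?n)) \<in> R\<^sup>+"
    proof (induction j)
      case 0
      have "(cs!(0 mod ?n), cs!(Suc 0 mod ?n)) \<in> R" by (rule step)
      then show ?case by simp
    next
      case (Suc j)
      from Suc.IH step[of "Suc j"] show ?case by (rule trancl_into_trancl)
    qed
  qed
  have "(cs!0, cs!(Suc (?n - 1) mod ?n)) \<in> R\<^sup>+" by (rule main)
  moreover have "Suc (?n - 1) mod ?n = 0" using n0 by simp
  ultimately show ?thesis by simp
qed

lemma edge_cases: "ecgraph V E \<Longrightarrow> e \<in> E \<Longrightarrow> v \<in> e \<Longrightarrow> \<exists>w. e = {v,w} \<and> w \<noteq> v"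
proof -
  assume a: "ecgraph V E" "e \<in> E" "v \<in> e"
  then obtain x y where xy: "x \<noteq> y" "e = {x,y}" unfolding ecgraph_def by blast
  show ?thesis
  proof (cases "v = x")
    case True then show ?thesis using xy by blast
  next
    case False then have "v = y" using a(3) xy by blast
    then show ?thesis using xy by (intro exI[of _ x]) (auto simp: insert_commute)
  qed
qed

lemma finite_E: "ecgraph V E \<Longrightarrow> finite E"
proof -
  assume "ecgraph V E"
  then have "E \<subseteq> Pow V" "finite V" unfolding ecgraph_def by auto
  then show "finite E" by (meson finite_Pow_iff finite_subset)
qed

lemma colors_le2:
  assumes "ecgraph V E" "full E A" "\<not> conflict col A"
  shows "card (colors_at E col v) \<le> 2"
proof -
  obtain a where ha: "\<forall>w. (w,v)\<in>A \<longrightarrow> col{w,v} = a"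
  proof (cases "\<exists>w0. (w0,v)\<in>A")
    case True then obtain w0 where "(w0,v)\<in>A" by blast
    then have "\<forall>w. (w,v)\<in>A \<longrightarrow> col{w,v} = col{w0,v}" using assms(3) unfolding conflict_def by blast
    then show ?thesis using that by blast
  next
    case False then show ?thesis using that by blast
  qed
  obtain b where hb: "\<forall>w. (v,w)\<in>A \<longrightarrow> col{v,w} = b"
  proof (cases "\<exists>w0. (v,w0)\<in>A")
    case True then obtain w0 where "(v,w0)\<in>A" by blast
    then have "\<forall>w. (v,w)\<in>A \<longrightarrow> col{v,w} = col{v,w0}" using assms(3) unfolding conflict_def by blast
    then show ?thesis using that by blast
  next
    case False then show ?thesis using that by blast
  qed
  have "colors_at E col v \<subseteq> {a,b}"
  proof
    fix c assume "c \<in> colors_at E col v"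
    then obtain e where e: "e \<in> E" "v \<in> e" "c = col e" unfolding colors_at_def by auto
    then obtain w where w: "e = {v,w}" using edge_cases[OF assms(1)] by blast
    then have "(v,w)\<in>A \<or> (w,v)\<in>A" using assms(2) e unfolding full_def by blast
    then show "c \<in> {a,b}" using ha hb e w by (auto simp: insert_commute)
  qed
  then have "card (colors_at E col v) \<le> card {a,b}" by (rule card_mono[rotated]) simp
  also have "\<dots> \<le> 2" by (simp add: card_insert_le_m1)
  finally show ?thesis .
qed

lemma good_cond3:
  assumes g: "ecgraph V E" and ao: "arcs_on E A" and fu: "full E A" and nc: "\<not> conflict col A"
    and ac: "acyclic A"
  shows "cond3 V E col"
  unfolding cond3_def
proof (intro conjI ballI allI impI)
  fix v show "card (colors_at E col v) \<le> 2" by (rule colors_le2[OF g fu nc])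
next
  fix cs assume cy: "is_cycle V E cs"
  let ?n = "length cs"
  have n3: "?n \<ge> 3" using cy unfolding is_cycle_def by simp
  have ed: "\<And>i. i < ?n \<Longrightarrow> {cs!i, cs!((i+1) mod ?n)} \<in> E" using cy unfolding is_cycle_def by blast
  have or: "\<And>i. i < ?n \<Longrightarrow> (cs!i, cs!((i+1) mod ?n)) \<in> A \<or> (cs!((i+1) mod ?n), cs!i) \<in> A"
    using ed fu unfolding full_def by blast
  have eqs: "\<And>i. i < ?n \<Longrightarrow> cycle_mono col cs i = chg A cs i"
  proof -
    fix i assume i: "i < ?n"
    let ?p = "(i + ?n - 1) mod ?n"
    have "0 < ?n" using n3 by linarith
    then have p1: "?p < ?n" by (rule mod_less_divisor)
    have p2: "(?p + 1) mod ?n = i" by (rule next_prev[OF i])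
    have "(cs!?p, cs!i) \<in> A \<or> (cs!i, cs!?p) \<in> A" using or[OF p1] unfolding p2 by blast
    then show "cycle_mono col cs i = chg A cs i"
      by (rule mono_chg_local[OF nc i _ or[OF i]])
  qed
  then have nm: "num_mono col cs = card {i. i < ?n \<and> chg A cs i}"
  proof -
    have "{i. i < ?n \<and> cycle_mono col cs i} = {i. i < ?n \<and> chg A cs i}" using eqs by blast
    then show ?thesis unfolding num_mono_def by simp
  qed
  show "even (num_mono col cs)" using nm chg_even by simp
  show "0 < num_mono col cs"
  proof (rule ccontr)
    assume "\<not> 0 < num_mono col cs"
    then have "card {i. i < ?n \<and> chg A cs i} = 0" using nm by simp
    then have nc0: "\<And>i. i < ?n \<Longrightarrow> \<not> chg A cs i" by auto
    have const: "\<And>i. i < ?n \<Longrightarrow> gdir A cs i = gdir A cs 0"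
    proof -
      fix i show "i < ?n \<Longrightarrow> gdir A cs i = gdir A cs 0"
      proof (induction i)
        case 0 then show ?case by simp
      next
        case (Suc i)
        have "\<not> chg A cs (Suc i)" using nc0 Suc.prems .
        moreover have "(Suc i + ?n - 1) mod ?n = i" using Suc.prems by simp
        ultimately show ?case using Suc by (simp add: chg_def)
      qed
    qed
    show False
    proof (cases "gdir A cs 0")
      case True
      then have "\<forall>i<?n. (cs!i, cs!((i+1) mod ?n)) \<in> A" using const unfolding gdir_def by blast
      moreover have n0: "0 < ?n" using n3 by linarith
      ultimately have "(cs!0, cs!0) \<in> A\<^sup>+" using cyc_trancl[of cs A] by blast
      then show False using ac unfolding acyclic_def by blast
    next
      case False
      have "\<forall>i<?n. (cs!i, cs!((i+1) mod ?n)) \<in> A\<inverse>"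
      proof (intro allI impI)
        fix i assume i: "i < ?n"
        then have "\<not> gdir A cs i" using const False by blast
        then have "(cs!i, cs!((i+1) mod ?n)) \<notin> A" unfolding gdir_def by simp
        then show "(cs!i, cs!((i+1) mod ?n)) \<in> A\<inverse>" using or[OF i] by simp
      qed
      moreover have n0: "0 < ?n" using n3 by linarith
      ultimately have "(cs!0, cs!0) \<in> (A\<inverse>)\<^sup>+" using cyc_trancl[of cs "A\<inverse>"] by blast
      moreover have "acyclic (A\<inverse>)" using ac by simp
      ultimately show False unfolding acyclic_def by blast
    qed
  qed
qed


lemma edge_ne: "ecgraph V E \<Longrightarrow> {x,y} \<in> E \<Longrightarrow> x \<noteq> y \<and> x \<in> V \<and> y \<in> V"
proof -
  assume a: "ecgraph V E" "{x,y} \<in> E"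
  then obtain u v where uv: "u \<noteq> v" "u \<in> V" "v \<in> V" "{x,y} = {u,v}" unfolding ecgraph_def by blast
  then have "x \<in> {u,v}" "y \<in> {u,v}" by auto
  moreover have "x \<noteq> y"
  proof
    assume "x = y" then have "{u,v} = {x}" using uv by simp
    then have "u \<in> {x}" "v \<in> {x}" by (metis insertI1, metis insertI1 insertI2)
    then show False using uv(1) by simp
  qed
  ultimately show ?thesis using uv by auto
qed

definition pos :: "'a list \<Rightarrow> 'a \<Rightarrow> nat" where
  "pos vs x = (THE i. i < length vs \<and> vs!i = x)"

lemma pos_nth: "distinct vs \<Longrightarrow> i < length vs \<Longrightarrow> pos vs (vs!i) = i"
  unfolding pos_def by (rule the_equality) (auto simp: nth_eq_iff_index_eq)

lemma pos_in: "distinct vs \<Longrightarrow> x \<in> set vs \<Longrightarrow> pos vs x < length vs \<and> vs!(pos vs x) = x"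
proof -
  assume d: "distinct vs" and x: "x \<in> set vs"
  then obtain i where i: "i < length vs" "vs!i = x" by (auto simp: in_set_conv_nth)
  then show ?thesis using pos_nth[OF d i(1)] by simp
qed

lemma type5_good:
  assumes g: "ecgraph V E" and t: "type5_ordering V E col vs"
  defines "Or \<equiv> {(x,y). {x,y}\<in>E \<and> pos vs x < pos vs y}"
  shows "arcs_on E Or \<and> full E Or \<and> \<not> conflict col Or \<and> acyclic Or"
proof (intro conjI)
  have d: "distinct vs" and sv: "set vs = V" using t unfolding type5_ordering_def by auto
  have T: "\<And>i j k. i < length vs \<Longrightarrow> j < length vs \<Longrightarrow> k < length vs \<Longrightarrow>
        ((i < j \<and> i < k \<and> {vs!i, vs!j} \<in> E \<and> {vs!i, vs!k} \<in> E)
            \<longrightarrow> col {vs!i, vs!j} = col {vs!i, vs!k}) \<and>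
        ((j < i \<and> k < i \<and> {vs!i, vs!j} \<in> E \<and> {vs!i, vs!k} \<in> E)
            \<longrightarrow> col {vs!i, vs!j} = col {vs!i, vs!k}) \<and>
        ((j < i \<and> i < k \<and> {vs!i, vs!j} \<in> E \<and> {vs!i, vs!k} \<in> E)
            \<longrightarrow> col {vs!i, vs!j} \<noteq> col {vs!i, vs!k})"
    using t unfolding type5_ordering_def by blast
  have P: "\<And>x y. {x,y} \<in> E \<Longrightarrow> pos vs x < length vs \<and> vs!(pos vs x) = x \<and> pos vs y < length vs \<and> vs!(pos vs y) = y"
    using edge_ne[OF g] pos_in[OF d] sv by blast
  have cs: "\<And>x y. col{x,y} = col{y,x}" by (simp add: insert_commute)
  have es: "\<And>x y. ({x,y} \<in> E) = ({y,x} \<in> E)" by (simp add: insert_commute)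
  show "arcs_on E Or" unfolding arcs_on_def Or_def by auto
  show "full E Or" unfolding full_def Or_def
  proof (intro allI impI)
    fix x y assume e: "{x,y} \<in> E"
    then have "x \<noteq> y" using edge_ne[OF g] by blast
    then have "pos vs x \<noteq> pos vs y" using P[OF e] by metis
    then show "(x, y) \<in> {(x, y). {x, y} \<in> E \<and> pos vs x < pos vs y} \<or>
          (y, x) \<in> {(x, y). {x, y} \<in> E \<and> pos vs x < pos vs y}" using e es by auto
  qed
  show "\<not> conflict col Or"
  proof
    assume "conflict col Or"
    then obtain z a b where
      h: "((a, z) \<in> Or \<and> (b, z) \<in> Or \<and> col {a, z} \<noteq> col {b, z}) \<or>
      ((z, a) \<in> Or \<and> (z, b) \<in> Or \<and> col {z, a} \<noteq> col {z, b}) \<or>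
      ((a, z) \<in> Or \<and> (z, b) \<in> Or \<and> col {a, z} = col {z, b})"
      unfolding conflict_def by blast
    then show False
    proof (elim disjE conjE)
      assume a1: "(a, z) \<in> Or" and a2: "(b, z) \<in> Or" and a3: "col {a, z} \<noteq> col {b, z}"
      have e1: "{z,a} \<in> E" "pos vs a < pos vs z" using a1 es unfolding Or_def by auto
      have e2: "{z,b} \<in> E" "pos vs b < pos vs z" using a2 es unfolding Or_def by auto
      have "col {vs!pos vs z, vs!pos vs a} = col {vs!pos vs z, vs!pos vs b}"
        using T[of "pos vs z" "pos vs a" "pos vs b"] P[OF e1(1)] P[OF e2(1)] e1 e2 by auto
      then show False using a3 P[OF e1(1)] P[OF e2(1)] cs by metis
    next
      assume a1: "(z, a) \<in> Or" and a2: "(z, b) \<in> Or" and a3: "col {z, a} \<noteq> col {z, b}"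
      have e1: "{z,a} \<in> E" "pos vs z < pos vs a" using a1 unfolding Or_def by auto
      have e2: "{z,b} \<in> E" "pos vs z < pos vs b" using a2 unfolding Or_def by auto
      have "col {vs!pos vs z, vs!pos vs a} = col {vs!pos vs z, vs!pos vs b}"
        using T[of "pos vs z" "pos vs a" "pos vs b"] P[OF e1(1)] P[OF e2(1)] e1 e2 by auto
      then show False using a3 P[OF e1(1)] P[OF e2(1)] by metis
    next
      assume a1: "(a, z) \<in> Or" and a2: "(z, b) \<in> Or" and a3: "col {a, z} = col {z, b}"
      have e1: "{z,a} \<in> E" "pos vs a < pos vs z" using a1 es unfolding Or_def by auto
      have e2: "{z,b} \<in> E" "pos vs z < pos vs b" using a2 unfolding Or_def by auto
      have "col {vs!pos vs z, vs!pos vs a} \<noteq> col {vs!pos vs z, vs!pos vs b}"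
        using T[of "pos vs z" "pos vs a" "pos vs b"] P[OF e1(1)] P[OF e2(1)] e1 e2 by auto
      then show False using a3 P[OF e1(1)] P[OF e2(1)] cs by metis
    qed
  qed
  show "acyclic Or"
  proof (rule acyclic_subset)
    show "acyclic (inv_image less_than (pos vs))" by (rule wf_acyclic) (rule wf_inv_image[OF wf_less_than])
    show "Or \<subseteq> inv_image less_than (pos vs)" unfolding Or_def by auto
  qed
qed


lemma topo_list:
  assumes "finite S" "acyclic A"
  shows "\<exists>vs. distinct vs \<and> set vs = S \<and> (\<forall>i j. i < j \<longrightarrow> j < length vs \<longrightarrow> (vs!j, vs!i) \<notin> A)"
  using assms(1)
proof (induction S rule: finite_remove_induct)
  case empty then show ?case by (intro exI[of _ "[]"]) simp
next
  case (remove S)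
  have fr: "finite (A \<inter> S \<times> S)" using remove.hyps(1) by simp
  have "acyclic (A \<inter> S \<times> S)" using assms(2) by (rule acyclic_subset) blast
  then have wf: "wf (A \<inter> S \<times> S)" using finite_acyclic_wf[OF fr] by blast
  obtain x0 where "x0 \<in> S" using remove.hyps(2) by blast
  then obtain z where z: "z \<in> S" "\<And>y. (y, z) \<in> A \<inter> S \<times> S \<Longrightarrow> y \<notin> S"
    using wfE_min[OF wf] by blast
  have zmin: "\<And>y. y \<in> S \<Longrightarrow> (y, z) \<notin> A" using z by blast
  obtain vs where vs: "distinct vs" "set vs = S - {z}" "\<forall>i j. i < j \<longrightarrow> j < length vs \<longrightarrow> (vs!j, vs!i) \<notin> A"
    using remove.IH[OF z(1)] by blast
  show ?case
  proof (intro exI[of _ "z # vs"] conjI allI impI)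
    show "distinct (z # vs)" using vs by simp
    show "set (z # vs) = S" using vs z(1) by auto
    fix i j assume ij: "i < j" "j < length (z # vs)"
    then obtain j' where j': "j = Suc j'" "j' < length vs" by (cases j) auto
    show "((z # vs)!j, (z # vs)!i) \<notin> A"
    proof (cases i)
      case 0
      have "vs!j' \<in> S" using j'(2) vs(2) nth_mem by fastforce
      then show ?thesis using zmin 0 j' by simp
    next
      case (Suc i')
      then show ?thesis using vs(3) ij j' by simp
    qed
  qed
qed

lemma good_type5:
  assumes g: "ecgraph V E" and ao: "arcs_on E A" and fu: "full E A" and nc: "\<not> conflict col A"
    and ac: "acyclic A"
  shows "pc_acyclic_type5 V E col"
proof -
  have fV: "finite V" using g unfolding ecgraph_def by simp
  obtain vs where vs: "distinct vs" "set vs = V" and no: "\<And>i j. i < j \<Longrightarrow> j < length vs \<Longrightarrow> (vs!j, vs!i) \<notin> A"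
    using topo_list[OF fV ac] by blast
  have es: "\<And>x y. ({x,y} \<in> E) = ({y,x} \<in> E)" by (simp add: insert_commute)
  have cs: "\<And>x y. col{x,y} = col{y,x}" by (simp add: insert_commute)
  have fwd: "\<And>i j. i < j \<Longrightarrow> j < length vs \<Longrightarrow> {vs!i, vs!j} \<in> E \<Longrightarrow> (vs!i, vs!j) \<in> A"
    using fu no unfolding full_def by blast
  have nc': "\<And>z a b. \<not>(((a, z) \<in> A \<and> (b, z) \<in> A \<and> col {a, z} \<noteq> col {b, z}) \<or>
      ((z, a) \<in> A \<and> (z, b) \<in> A \<and> col {z, a} \<noteq> col {z, b}) \<or>
      ((a, z) \<in> A \<and> (z, b) \<in> A \<and> col {a, z} = col {z, b}))"
    using nc unfolding conflict_def by blast
  have "type5_ordering V E col vs"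
    unfolding type5_ordering_def
  proof (intro conjI allI impI vs)
    fix i j k assume i: "i < length vs" and j: "j < length vs" and k: "k < length vs"
    { assume h: "i < j \<and> i < k \<and> {vs!i, vs!j} \<in> E \<and> {vs!i, vs!k} \<in> E"
      then have "(vs!i, vs!j) \<in> A" "(vs!i, vs!k) \<in> A" using fwd j k by auto
      then show "col {vs!i, vs!j} = col {vs!i, vs!k}" using nc'[where z="vs!i" and a="vs!j" and b="vs!k"] by blast }
    { assume h: "j < i \<and> k < i \<and> {vs!i, vs!j} \<in> E \<and> {vs!i, vs!k} \<in> E"
      then have "(vs!j, vs!i) \<in> A" "(vs!k, vs!i) \<in> A" using fwd i es by auto
      then have "col {vs!j, vs!i} = col {vs!k, vs!i}" using nc'[where z="vs!i" and a="vs!j" and b="vs!k"] by blast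
      then show "col {vs!i, vs!j} = col {vs!i, vs!k}" using cs by metis }
    { assume h: "j < i \<and> i < k \<and> {vs!i, vs!j} \<in> E \<and> {vs!i, vs!k} \<in> E"
      then have "(vs!j, vs!i) \<in> A" "(vs!i, vs!k) \<in> A" using fwd i k es by auto
      then have "col {vs!j, vs!i} \<noteq> col {vs!i, vs!k}" using nc'[where z="vs!i" and a="vs!j" and b="vs!k"] by blast
      then show "col {vs!i, vs!j} \<noteq> col {vs!i, vs!k}" using cs by metis }
  qed
  then show ?thesis unfolding pc_acyclic_type5_def by blast
qed


definition is_path :: "('a\<times>'a) set \<Rightarrow> 'a list \<Rightarrow> bool" where
  "is_path R ps \<longleftrightarrow> (\<forall>i. Suc i < length ps \<longrightarrow> (ps!i, ps!Suc i) \<in> R)"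

lemma path_exists:
  assumes "(a,b) \<in> R\<^sup>*"
  shows "\<exists>ps. ps \<noteq> [] \<and> hd ps = a \<and> last ps = b \<and> distinct ps \<and> is_path R ps"
  using assms
proof (induction rule: converse_rtrancl_induct)
  case base then show ?case by (intro exI[of _ "[b]"]) (simp add: is_path_def)
next
  case (step a a')
  then obtain ps where ps: "ps \<noteq> []" "hd ps = a'" "last ps = b" "distinct ps" "is_path R ps" by blast
  show ?case
  proof (cases "a \<in> set ps")
    case False
    show ?thesis
    proof (intro exI[of _ "a # ps"] conjI)
      show "is_path R (a # ps)" unfolding is_path_def
      proof (intro allI impI)
        fix i assume i: "Suc i < length (a # ps)"
        show "((a # ps)!i, (a # ps)!Suc i) \<in> R"
        proof (cases i)
          case 0 then show ?thesis using step.hyps(1) ps(1,2) by (simp add: hd_conv_nth)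
        next
          case (Suc i') then show ?thesis using ps(5) i unfolding is_path_def by simp
        qed
      qed
    qed (use ps False in auto)
  next
    case True
    then obtain xs ys where sp: "ps = xs @ a # ys" by (meson split_list)
    have dr: "a # ys = drop (length xs) ps" using sp by simp
    show ?thesis
    proof (intro exI[of _ "a # ys"] conjI)
      show "last (a # ys) = b" using ps(3) sp by (metis last_appendR list.distinct(1))
      show "distinct (a # ys)" using ps(4) sp by simp
      show "is_path R (a # ys)" unfolding is_path_def
      proof (intro allI impI)
        fix i assume i: "Suc i < length (a # ys)"
        have "Suc (length xs + i) < length ps" using i sp by simp
        then have "(ps!(length xs + i), ps!Suc (length xs + i)) \<in> R"
          using ps(5) unfolding is_path_def by blast
        moreover have "ps!(length xs + i) = (a # ys)!i" using sp by (simp add: nth_append)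
        moreover have "ps!Suc (length xs + i) = (a # ys)!Suc i"
          using sp nth_append_length_plus[of xs "a # ys" "Suc i"] by simp
        ultimately show "((a # ys)!i, (a # ys)!Suc i) \<in> R" by simp
      qed
    qed simp_all
  qed
qed

lemma directed_cycle:
  assumes "(x,x) \<in> A\<^sup>+"
  shows "\<exists>cs. cs \<noteq> [] \<and> distinct cs \<and> (\<forall>i<length cs. (cs!i, cs!((i+1) mod length cs)) \<in> A)"
proof -
  obtain y where y: "(x,y) \<in> A" "(y,x) \<in> A\<^sup>*" using assms by (meson tranclD)
  obtain ps where ps: "ps \<noteq> []" "hd ps = y" "last ps = x" "distinct ps" "is_path A ps"
    using path_exists[OF y(2)] by blast
  show ?thesis
  proof (intro exI[of _ ps] conjI allI impI ps(1,4))
    fix i assume i: "i < length ps"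
    show "(ps!i, ps!((i+1) mod length ps)) \<in> A"
    proof (cases "Suc i < length ps")
      case True then show ?thesis using ps(5) unfolding is_path_def by simp
    next
      case False
      then have ii: "i = length ps - 1" using i by simp
      then have "i + 1 = length ps" using i by simp
      then have "(i + 1) mod length ps = 0" by simp
      moreover have "ps!i = x" using ps(1,3) ii by (simp add: last_conv_nth)
      moreover have "ps!0 = y" using ps(1,2) by (simp add: hd_conv_nth)
      ultimately show ?thesis using y(1) by simp
    qed
  qed
qed

lemma cond3_acyclic:
  assumes g: "ecgraph V E" and c3: "cond3 V E col" and ao: "arcs_on E A" and nc: "\<not> conflict col A"
  shows "acyclic A"
  unfolding acyclic_def
proof (intro allI notI)
  fix x assume "(x,x) \<in> A\<^sup>+"
  from directed_cycle[OF this] obtain cs where cs: "cs \<noteq> []" "distinct cs" and st: "\<forall>i<length cs. (cs!i, cs!((i+1) mod length cs)) \<in> A"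
    by blast
  let ?n = "length cs"
  have ed: "\<And>i. i < ?n \<Longrightarrow> {cs!i, cs!((i+1) mod ?n)} \<in> E" using st ao unfolding arcs_on_def by blast
  show False
  proof (cases "?n \<ge> 3")
    case False
    moreover have "?n \<noteq> 0" using cs(1) by simp
    ultimately have "?n = 1 \<or> ?n = 2" by linarith
    then show False
    proof
      assume n1: "?n = 1"
      have e0: "{cs!0, cs!0} \<in> E" using ed[of 0] n1 by simp
      show False using edge_ne[OF g e0] by simp
    next
      assume n2: "?n = 2"
      have "(cs!0, cs!1) \<in> A" using st[rule_format, of 0] n2 by simp
      moreover have "(cs!1, cs!0) \<in> A" using st[rule_format, of 1] n2 by simp
      ultimately show False using no_both[OF nc] by blast
    qed
  next
    case True
    have cy: "is_cycle V E cs" unfolding is_cycle_def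
    proof (intro conjI True cs(2) allI impI)
      show "set cs \<subseteq> V"
      proof
        fix v assume "v \<in> set cs"
        then obtain i where i: "i < ?n" "cs!i = v" by (auto simp: in_set_conv_nth)
        then show "v \<in> V" using edge_ne[OF g ed[OF i(1)]] by simp
      qed
      fix i assume "i < ?n" then show "{cs!i, cs!((i+1) mod ?n)} \<in> E" by (rule ed)
    qed
    have "\<And>i. i < ?n \<Longrightarrow> \<not> cycle_mono col cs i"
    proof
      fix i assume i: "i < ?n" and m: "cycle_mono col cs i"
      let ?p = "(i + ?n - 1) mod ?n"
      have "0 < ?n" using True by linarith
      then have p1: "?p < ?n" by (rule mod_less_divisor)
      have p2: "(?p + 1) mod ?n = i" by (rule next_prev[OF i])
      have "(cs!?p, cs!i) \<in> A" using st p1 p2 by metis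
      moreover have "(cs!i, cs!((i+1) mod ?n)) \<in> A" using st i by blast
      moreover have "col {cs!?p, cs!i} = col {cs!i, cs!((i+1) mod ?n)}" using m cycle_mono_alt[OF i] by blast
      ultimately have "conflict col A" unfolding conflict_def
        by (intro exI[of _ "cs!i"] exI[of _ "cs!?p"] exI[of _ "cs!((i+1) mod ?n)"]) simp
      then show False using nc by simp
    qed
    then have "num_mono col cs = 0" unfolding num_mono_def by simp
    then show False using c3 cy unfolding cond3_def by auto
  qed
qed


definition conflict_at :: "('a set \<Rightarrow> 'c) \<Rightarrow> ('a \<times> 'a) set \<Rightarrow> 'a \<Rightarrow> bool" where
  "conflict_at col Arcs z \<longleftrightarrow> (\<exists>u w.
      ((u, z) \<in> Arcs \<and> (w, z) \<in> Arcs \<and> col {u, z} \<noteq> col {w, z}) \<or>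
      ((z, u) \<in> Arcs \<and> (z, w) \<in> Arcs \<and> col {z, u} \<noteq> col {z, w}) \<or>
      ((u, z) \<in> Arcs \<and> (z, w) \<in> Arcs \<and> col {u, z} = col {z, w}))"

lemma conflict_iff_at: "conflict col A \<longleftrightarrow> (\<exists>z. conflict_at col A z)"
  unfolding conflict_def conflict_at_def by blast

lemma no_both_at: "\<not> conflict_at col A x \<Longrightarrow> (x,w)\<in>A \<Longrightarrow> (w,x)\<in>A \<Longrightarrow> False"
proof -
  assume a: "\<not> conflict_at col A x" "(x,w)\<in>A" "(w,x)\<in>A"
  have "col{w,x} = col{x,w}" by (simp add: insert_commute)
  then have "conflict_at col A x" unfolding conflict_at_def using a(2,3) by blast
  then show False using a(1) by blast
qed

lemma dir_at_at:
  assumes "\<not> conflict_at col A x" "(x,w)\<in>A \<or> (w,x)\<in>A" "(x,w')\<in>A \<or> (w',x)\<in>A"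
  shows "(((x,w)\<in>A) = ((x,w')\<in>A)) = (col{x,w} = col{x,w'})"
  using assms unfolding conflict_at_def
  by (smt (verit) insert_commute)

lemma pc_at_at:
  assumes "\<not> conflict_at col A z" "(a,z)\<in>A \<or> (z,a)\<in>A" "(z,b)\<in>A \<or> (b,z)\<in>A"
  shows "(col{a,z} = col{z,b}) = (((a,z)\<in>A) \<noteq> ((z,b)\<in>A))"
proof -
  have "(((z,a)\<in>A) = ((z,b)\<in>A)) = (col{z,a} = col{z,b})"
    using dir_at_at[OF assms(1)] assms(2,3) by blast
  moreover have "(a,z)\<in>A \<longleftrightarrow> (z,a)\<notin>A" using assms(2) no_both_at[OF assms(1)] by blast
  ultimately show ?thesis by (auto simp: insert_commute)
qed

lemma mono_chg_local_at:
  assumes "\<not> conflict_at col B (cs!i)" "i < length cs"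
    "(cs!((i + length cs - 1) mod length cs), cs!i) \<in> B \<or> (cs!i, cs!((i + length cs - 1) mod length cs)) \<in> B"
    "(cs!i, cs!((i+1) mod length cs)) \<in> B \<or> (cs!((i+1) mod length cs), cs!i) \<in> B"
  shows "cycle_mono col cs i = chg B cs i"
  unfolding cycle_mono_alt[OF assms(2)] chg_alt[OF assms(2)]
  by (rule pc_at_at[OF assms(1,3,4)])

lemma conflict_at_insert_other:
  "z \<noteq> x \<Longrightarrow> z \<noteq> y \<Longrightarrow> conflict_at col (insert (x,y) A) z = conflict_at col A z"
  unfolding conflict_at_def by auto

lemma add_out_at:
  assumes nc: "\<not> conflict_at col A u" and o: "outok col A u (col{u,v})" and "u \<noteq> v"
  shows "\<not> conflict_at col (insert (u,v) A) u"
proof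
  assume "conflict_at col (insert (u,v) A) u"
  then obtain a b where
    h: "((a, u) \<in> insert (u,v) A \<and> (b, u) \<in> insert (u,v) A \<and> col {a, u} \<noteq> col {b, u}) \<or>
      ((u, a) \<in> insert (u,v) A \<and> (u, b) \<in> insert (u,v) A \<and> col {u, a} \<noteq> col {u, b}) \<or>
      ((a, u) \<in> insert (u,v) A \<and> (u, b) \<in> insert (u,v) A \<and> col {a, u} = col {u, b})"
    unfolding conflict_at_def by blast
  have o1: "\<And>w. (u,w)\<in>A \<Longrightarrow> col{u,w} = col{u,v}" and o2: "\<And>w. (w,u)\<in>A \<Longrightarrow> col{w,u} \<noteq> col{u,v}"
    using o unfolding outok_def by auto
  have nc': "\<And>a b. \<not>(((a, u) \<in> A \<and> (b, u) \<in> A \<and> col {a, u} \<noteq> col {b, u}) \<or>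
      ((u, a) \<in> A \<and> (u, b) \<in> A \<and> col {u, a} \<noteq> col {u, b}) \<or>
      ((a, u) \<in> A \<and> (u, b) \<in> A \<and> col {a, u} = col {u, b}))"
    using nc unfolding conflict_at_def by blast
  have inn: "\<And>a. (a,u) \<in> insert (u,v) A \<Longrightarrow> (a,u) \<in> A" using \<open>u\<noteq>v\<close> by auto
  from h show False
  proof (elim disjE conjE)
    assume a1: "(a, u) \<in> insert (u,v) A" and a2: "(b, u) \<in> insert (u,v) A" and a3: "col {a, u} \<noteq> col {b, u}"
    show False using inn[OF a1] inn[OF a2] a3 nc'[where a=a and b=b] by blast
  next
    assume a1: "(u, a) \<in> insert (u,v) A" and a2: "(u, b) \<in> insert (u,v) A" and a3: "col {u, a} \<noteq> col {u, b}"
    have c1: "col {u,a} = col{u,v}" using a1 o1 by auto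
    have c2: "col {u,b} = col{u,v}" using a2 o1 by auto
    show False using a3 c1 c2 by simp
  next
    assume a1: "(a, u) \<in> insert (u,v) A" and a2: "(u, b) \<in> insert (u,v) A" and a3: "col {a, u} = col {u, b}"
    have aA: "(a,u) \<in> A" by (rule inn[OF a1])
    show False
    proof (cases "b = v")
      case True then show False using o2[OF aA] a3 by simp
    next
      case False then have "(u,b) \<in> A" using a2 by auto
      then show False using aA a3 nc'[where a=a and b=b] by blast
    qed
  qed
qed

definition flip :: "('a \<Rightarrow> bool) \<Rightarrow> ('a \<times> 'a) set \<Rightarrow> ('a \<times> 'a) set" where
  "flip \<sigma> A = {(x,y). ((x,y) \<in> A \<and> \<sigma> x) \<or> ((y,x) \<in> A \<and> \<not> \<sigma> x)}"

lemma flip_at: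
  assumes "\<forall>x y. (x,y) \<in> A \<longrightarrow> \<sigma> x = \<sigma> y"
  shows "((w,z) \<in> flip \<sigma> A) = (if \<sigma> z then (w,z) \<in> A else (z,w) \<in> A)"
    and "((z,w) \<in> flip \<sigma> A) = (if \<sigma> z then (z,w) \<in> A else (w,z) \<in> A)"
proof -
  have a: "(x,y) \<in> A \<Longrightarrow> \<sigma> x = \<sigma> y" for x y using assms by blast
  show "((w,z) \<in> flip \<sigma> A) = (if \<sigma> z then (w,z) \<in> A else (z,w) \<in> A)"
    unfolding flip_def using a[of w z] a[of z w] by (cases "\<sigma> z"; cases "\<sigma> w") auto
  show "((z,w) \<in> flip \<sigma> A) = (if \<sigma> z then (z,w) \<in> A else (w,z) \<in> A)"
    unfolding flip_def using a[of w z] a[of z w] by (cases "\<sigma> z"; cases "\<sigma> w") auto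
qed

lemma flip_conflict_at:
  assumes "\<forall>x y. (x,y) \<in> A \<longrightarrow> \<sigma> x = \<sigma> y" "\<not> conflict_at col A z"
  shows "\<not> conflict_at col (flip \<sigma> A) z"
proof (cases "\<sigma> z")
  case True
  have tt: "((w,z) \<in> flip \<sigma> A) = ((w,z) \<in> A)" "((z,w) \<in> flip \<sigma> A) = ((z,w) \<in> A)" for w
    using flip_at(1)[OF assms(1), of w z] flip_at(2)[OF assms(1), of z w] True by simp_all
  show ?thesis using assms(2) unfolding conflict_at_def tt by assumption
next
  case False
  have fi: "((w,z) \<in> flip \<sigma> A) = ((z,w) \<in> A)" "((z,w) \<in> flip \<sigma> A) = ((w,z) \<in> A)" for w
    using flip_at(1)[OF assms(1), of w z] flip_at(2)[OF assms(1), of z w] False by simp_all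
  have cs: "\<And>x y. col{x,y} = col{y,x}" by (simp add: insert_commute)
  have nc': "\<And>a b. \<not>(((a, z) \<in> A \<and> (b, z) \<in> A \<and> col {a, z} \<noteq> col {b, z}) \<or>
      ((z, a) \<in> A \<and> (z, b) \<in> A \<and> col {z, a} \<noteq> col {z, b}) \<or>
      ((a, z) \<in> A \<and> (z, b) \<in> A \<and> col {a, z} = col {z, b}))"
    using assms(2) unfolding conflict_at_def by blast
  show ?thesis unfolding conflict_at_def fi
  proof (intro notI, elim exE disjE conjE)
    fix a b assume "(z,a)\<in>A" "(z,b)\<in>A" "col {a, z} \<noteq> col {b, z}"
    then show False using nc'[where a=a and b=b] cs by metis
  next
    fix a b assume "(a,z)\<in>A" "(b,z)\<in>A" "col {z, a} \<noteq> col {z, b}"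
    then show False using nc'[where a=a and b=b] cs by metis
  next
    fix a b assume "(z,a)\<in>A" "(b,z)\<in>A" "col {a, z} = col {z, b}"
    then show False using nc'[where a=b and b=a] cs by metis
  qed
qed

lemma flip_props:
  assumes "\<forall>x y. {x,y} \<in> F \<longrightarrow> \<sigma> x = \<sigma> y" "arcs_on F A" "full F A" "\<not> conflict col A"
  shows "arcs_on F (flip \<sigma> A) \<and> full F (flip \<sigma> A) \<and> \<not> conflict col (flip \<sigma> A)
    \<and> (\<forall>x y. (x,y) \<in> A \<longrightarrow> \<sigma> x = \<sigma> y)"
proof -
  have es: "\<And>x y. ({x,y} \<in> F) = ({y,x} \<in> F)" by (simp add: insert_commute)
  have c: "\<forall>x y. (x,y) \<in> A \<longrightarrow> \<sigma> x = \<sigma> y" using assms(1,2) unfolding arcs_on_def by blast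
  have "arcs_on F (flip \<sigma> A)" using assms(2) es unfolding arcs_on_def flip_def by auto
  moreover have "full F (flip \<sigma> A)" unfolding full_def
  proof (intro allI impI)
    fix x y assume e: "{x,y} \<in> F"
    then have sxy: "\<sigma> x = \<sigma> y" using assms(1) by blast
    have "(x,y) \<in> A \<or> (y,x) \<in> A" using e assms(3) unfolding full_def by blast
    then show "(x,y) \<in> flip \<sigma> A \<or> (y,x) \<in> flip \<sigma> A"
      unfolding flip_def using sxy by (cases "\<sigma> x") auto
  qed
  moreover have "\<not> conflict col (flip \<sigma> A)"
    using flip_conflict_at[OF c] assms(4) unfolding conflict_iff_at by blast
  ultimately show ?thesis using c by blast
qed

lemma flip_ok:
  assumes a: "\<forall>x y. (x,y) \<in> A \<longrightarrow> \<sigma> x = \<sigma> y"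
  shows "outok col (flip \<sigma> A) z c = (if \<sigma> z then outok col A z c else inok col A z c)"
    and "inok col (flip \<sigma> A) z c = (if \<sigma> z then inok col A z c else outok col A z c)"
proof -
  have cs: "col{w,z} = col{z,w}" for w by (simp add: insert_commute)
  have f1: "((w,z) \<in> flip \<sigma> A) = (if \<sigma> z then (w,z) \<in> A else (z,w) \<in> A)" for w by (rule flip_at(1)[OF a])
  have f2: "((z,w) \<in> flip \<sigma> A) = (if \<sigma> z then (z,w) \<in> A else (w,z) \<in> A)" for w by (rule flip_at(2)[OF a])
  show "outok col (flip \<sigma> A) z c = (if \<sigma> z then outok col A z c else inok col A z c)"
  proof (cases "\<sigma> z")
    case True then show ?thesis unfolding outok_def f1 f2 by simp
  next
    case False then show ?thesis unfolding outok_def inok_def f1 f2 cs by auto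
  qed
  show "inok col (flip \<sigma> A) z c = (if \<sigma> z then inok col A z c else outok col A z c)"
  proof (cases "\<sigma> z")
    case True then show ?thesis unfolding inok_def f1 f2 by simp
  next
    case False then show ?thesis unfolding outok_def inok_def f1 f2 cs by auto
  qed
qed


lemma in_colors_at: "e \<in> E \<Longrightarrow> x \<in> e \<Longrightarrow> col e \<in> colors_at E col x"
  unfolding colors_at_def by blast

lemma finite_colors_at: "finite E \<Longrightarrow> finite (colors_at E col x)"
  unfolding colors_at_def by simp

lemma vertex_ok:
  assumes g: "ecgraph V E" and nc: "\<not> conflict col A" and ao: "arcs_on F A" and FE: "F \<subseteq> E"
    and ex: "{x,v} \<in> E" and cb: "card (colors_at E col x) \<le> 2"
  shows "outok col A x (col{x,v}) \<or> inok col A x (col{x,v})"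
proof (rule ccontr)
  assume nn: "\<not> (outok col A x (col{x,v}) \<or> inok col A x (col{x,v}))"
  define c where "c = col{x,v}"
  have cs: "\<And>x y. col{x,y} = col{y,x}" by (simp add: insert_commute)
  have nc': "\<And>a b. \<not>(((a, x) \<in> A \<and> (b, x) \<in> A \<and> col {a, x} \<noteq> col {b, x}) \<or>
      ((x, a) \<in> A \<and> (x, b) \<in> A \<and> col {x, a} \<noteq> col {x, b}) \<or>
      ((a, x) \<in> A \<and> (x, b) \<in> A \<and> col {a, x} = col {x, b}))"
    using nc unfolding conflict_def by blast
  have n1: "\<not> outok col A x c" and n2: "\<not> inok col A x c" using nn c_def by simp_all
  obtain w1 where w1: "((x,w1)\<in>A \<and> col{x,w1} \<noteq> c) \<or> ((w1,x)\<in>A \<and> col{w1,x} = c)"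
    using n1 unfolding outok_def by blast
  obtain w2 where w2: "((w2,x)\<in>A \<and> col{w2,x} \<noteq> c) \<or> ((x,w2)\<in>A \<and> col{x,w2} = c)"
    using n2 unfolding inok_def by blast
  have fin: "finite (colors_at E col x)" by (rule finite_colors_at[OF finite_E[OF g]])
  from w1 w2 show False
  proof (elim disjE conjE)
    assume a1: "(x,w1)\<in>A" "col{x,w1} \<noteq> c" and a2: "(w2,x)\<in>A" "col{w2,x} \<noteq> c"
    have d: "col{w2,x} \<noteq> col{x,w1}" using nc'[where a=w2 and b=w1] a1 a2 by blast
    have e1: "{x,w1} \<in> E" using a1 ao FE unfolding arcs_on_def by blast
    have e2: "{w2,x} \<in> E" using a2 ao FE unfolding arcs_on_def by blast
    have "{c, col{x,w1}, col{w2,x}} \<subseteq> colors_at E col x"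
      using in_colors_at[OF ex, of x col] in_colors_at[OF e1, of x col] in_colors_at[OF e2, of x col] c_def by simp
    then have "card {c, col{x,w1}, col{w2,x}} \<le> card (colors_at E col x)" using fin by (rule card_mono[rotated])
    moreover have "card {c, col{x,w1}, col{w2,x}} = 3" using a1(2) a2(2) d by auto
    ultimately show False using cb by simp
  next
    assume a1: "(x,w1)\<in>A" "col{x,w1} \<noteq> c" and a2: "(x,w2)\<in>A" "col{x,w2} = c"
    show False using nc'[where a=w1 and b=w2] a1 a2 by auto
  next
    assume a1: "(w1,x)\<in>A" "col{w1,x} = c" and a2: "(w2,x)\<in>A" "col{w2,x} \<noteq> c"
    show False using nc'[where a=w1 and b=w2] a1 a2 by auto
  next
    assume a1: "(w1,x)\<in>A" "col{w1,x} = c" and a2: "(x,w2)\<in>A" "col{x,w2} = c"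
    show False using nc'[where a=w1 and b=w2] a1 a2 by auto
  qed
qed

lemma finish_arc:
  assumes ao: "arcs_on F A" and fu: "full F A" and nc: "\<not> conflict col A"
    and o: "outok col A x (col{x,y})" and i: "inok col A y (col{x,y})" and "x \<noteq> y"
  shows "arcs_on (insert {x,y} F) (insert (x,y) A) \<and> full (insert {x,y} F) (insert (x,y) A)
     \<and> \<not> conflict col (insert (x,y) A)"
proof (intro conjI)
  show "arcs_on (insert {x,y} F) (insert (x,y) A)" using ao unfolding arcs_on_def by auto
  show "full (insert {x,y} F) (insert (x,y) A)" unfolding full_def
  proof (intro allI impI)
    fix a b assume "{a,b} \<in> insert {x,y} F"
    then consider "{a,b} = {x,y}" | "{a,b} \<in> F" by blast
    then show "(a,b) \<in> insert (x,y) A \<or> (b,a) \<in> insert (x,y) A"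
    proof cases
      case 1 then have "(a = x \<and> b = y) \<or> (a = y \<and> b = x)" by (simp add: doubleton_eq_iff)
      then show ?thesis by auto
    next
      case 2 then show ?thesis using fu unfolding full_def by blast
    qed
  qed
  show "\<not> conflict col (insert (x,y) A)" by (rule add_arc[OF nc o i \<open>x\<noteq>y\<close>])
qed


lemma adjrel_iff: "(a,b) \<in> adjrel F \<longleftrightarrow> {a,b} \<in> F"
  unfolding adjrel_def by simp

lemma core_conn:
  assumes g: "ecgraph V E" and c3: "cond3 V E col" and FE: "F \<subseteq> E" and uvE: "{u,v} \<in> E"
    and nF: "{u,v} \<notin> F" and uv: "u \<noteq> v"
    and ao: "arcs_on F A" and fu: "full F A" and nc: "\<not> conflict col A"
    and conn: "(u,v) \<in> (adjrel F)\<^sup>*" and o: "outok col A u (col{u,v})"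
  shows "inok col A v (col{u,v})"
proof -
  obtain ps where ps: "ps \<noteq> []" "hd ps = u" "last ps = v" "distinct ps" "is_path (adjrel F) ps"
    using path_exists[OF conn] by blast
  let ?n = "length ps"
  define c where "c = col{u,v}"
  have cs: "\<And>x y. col{x,y} = col{y,x}" by (simp add: insert_commute)
  have p0: "ps!0 = u" using ps(1,2) by (simp add: hd_conv_nth)
  have pl: "ps!(?n - 1) = v" using ps(1,3) by (simp add: last_conv_nth)
  have pe: "\<And>i. Suc i < ?n \<Longrightarrow> {ps!i, ps!Suc i} \<in> F"
    using ps(5) unfolding is_path_def adjrel_iff by blast
  have n3: "?n \<ge> 3"
  proof (rule ccontr)
    assume "\<not> ?n \<ge> 3"
    moreover have "?n \<noteq> 0" using ps(1) by simp
    moreover have "?n \<noteq> 1" using p0 pl uv by auto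
    ultimately have n2: "?n = 2" by linarith
    then have "{ps!0, ps!Suc 0} \<in> F" using pe[of 0] by simp
    then show False using p0 pl n2 nF by simp
  qed
  have n0: "0 < ?n" using n3 by linarith
  define A' where "A' = insert (u,v) A"
  have vuA: "(v,u) \<notin> A"
  proof
    assume "(v,u) \<in> A" then have "{v,u} \<in> F" using ao unfolding arcs_on_def by blast
    then show False using nF by (simp add: insert_commute)
  qed
  have last_next: "(?n - 1 + 1) mod ?n = 0" using n0 by simp
  have mid_next: "\<And>i. Suc i < ?n \<Longrightarrow> (i + 1) mod ?n = Suc i" by simp
  have ori: "\<And>i. i < ?n \<Longrightarrow> (ps!i, ps!((i+1) mod ?n)) \<in> A' \<or> (ps!((i+1) mod ?n), ps!i) \<in> A'"
  proof -
    fix i assume i: "i < ?n"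
    show "(ps!i, ps!((i+1) mod ?n)) \<in> A' \<or> (ps!((i+1) mod ?n), ps!i) \<in> A'"
    proof (cases "Suc i < ?n")
      case True
      then have "{ps!i, ps!Suc i} \<in> F" by (rule pe)
      then have "(ps!i, ps!Suc i) \<in> A \<or> (ps!Suc i, ps!i) \<in> A" using fu unfolding full_def by blast
      then show ?thesis using mid_next[OF True] unfolding A'_def by auto
    next
      case False
      then have "i = ?n - 1" using i by simp
      then have "ps!i = v" "(i+1) mod ?n = 0" using pl last_next by auto
      then show ?thesis using p0 unfolding A'_def by auto
    qed
  qed
  have edges: "\<And>i. i < ?n \<Longrightarrow> {ps!i, ps!((i+1) mod ?n)} \<in> E"
  proof -
    fix i assume i: "i < ?n"
    show "{ps!i, ps!((i+1) mod ?n)} \<in> E"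
    proof (cases "Suc i < ?n")
      case True
      then show ?thesis using pe[OF True] mid_next[OF True] FE by auto
    next
      case False
      then have "i = ?n - 1" using i by simp
      then have "ps!i = v" "(i+1) mod ?n = 0" using pl last_next by auto
      then show ?thesis using p0 uvE by (simp add: insert_commute)
    qed
  qed
  have cy: "is_cycle V E ps" unfolding is_cycle_def
  proof (intro conjI n3 ps(4) allI impI)
    show "set ps \<subseteq> V"
    proof
      fix x assume "x \<in> set ps"
      then obtain i where i: "i < ?n" "ps!i = x" by (auto simp: in_set_conv_nth)
      then show "x \<in> V" using edge_ne[OF g edges[OF i(1)]] by simp
    qed
    fix i assume "i < ?n" then show "{ps!i, ps!((i+1) mod ?n)} \<in> E" by (rule edges)
  qed
  have ev: "even (num_mono col ps)" using c3 cy unfolding cond3_def by blast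
  have ncat: "\<And>z. \<not> conflict_at col A z" using nc unfolding conflict_iff_at by blast
  have eqs: "\<And>i. i < ?n \<Longrightarrow> i \<noteq> ?n - 1 \<Longrightarrow> cycle_mono col ps i = chg A' ps i"
  proof -
    fix i assume i: "i < ?n" and ik: "i \<noteq> ?n - 1"
    let ?p = "(i + ?n - 1) mod ?n"
    have p1: "?p < ?n" using n0 by (rule mod_less_divisor)
    have p2: "(?p + 1) mod ?n = i" by (rule next_prev[OF i])
    have op: "(ps!?p, ps!i) \<in> A' \<or> (ps!i, ps!?p) \<in> A'" using ori[OF p1] unfolding p2 by blast
    have loc: "\<not> conflict_at col A' (ps!i)"
    proof (cases "i = 0")
      case True
      have "\<not> conflict_at col (insert (u,v) A) u"
        by (rule add_out_at[OF ncat o uv])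
      then show ?thesis using True p0 unfolding A'_def by simp
    next
      case False
      have "ps!i \<noteq> u" using False p0 ps(4) i n0 by (metis nth_eq_iff_index_eq)
      moreover have "ps!i \<noteq> v" using ik pl ps(4) i n0 by (metis diff_less less_one nth_eq_iff_index_eq)
      ultimately show ?thesis using ncat conflict_at_insert_other unfolding A'_def by metis
    qed
    show "cycle_mono col ps i = chg A' ps i"
      by (rule mono_chg_local_at[OF loc i op ori[OF i]])
  qed
  have k: "?n - 1 < ?n" using n0 by simp
  have mk: "cycle_mono col ps (?n - 1) = chg A' ps (?n - 1)"
    by (rule parity_one[OF eqs k ev])
  have pk: "(?n - 1 + ?n - 1) mod ?n = ?n - 2"
  proof -
    have "?n - 1 + ?n - 1 = (?n - 2) + ?n" using n3 by simp
    then have "(?n - 1 + ?n - 1) mod ?n = ((?n - 2) + ?n) mod ?n" by (simp only:)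
    also have "\<dots> = (?n - 2) mod ?n" by (rule mod_add_self2)
    also have "\<dots> = ?n - 2" using n3 by simp
    finally show ?thesis .
  qed
  define p where "p = ps!(?n - 2)"
  have "ps!(?n - 2) \<noteq> ps!0" using ps(4) n3 by (subst nth_eq_iff_index_eq) auto
  then have pu: "p \<noteq> u" unfolding p_def using p0 by simp
  have pvF: "{p,v} \<in> F" using pe[of "?n - 2"] n3 pl unfolding p_def by (simp add: Suc_diff_Suc numeral_2_eq_2)
  have mono_k: "cycle_mono col ps (?n - 1) = (col{p,v} = c)"
    unfolding cycle_mono_alt[OF k] pk last_next p_def c_def using pl p0 cs by simp
  have chg_k: "chg A' ps (?n - 1) = ((p,v) \<in> A)"
    unfolding chg_alt[OF k] pk last_next using pl p0 vuA pu uv unfolding A'_def p_def by auto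
  have key: "(col{p,v} = c) = ((p,v) \<in> A)" using mk mono_k chg_k by simp
  have vo: "outok col A v (col{v,u}) \<or> inok col A v (col{v,u})"
    using vertex_ok[OF g nc ao FE, of v u] uvE c3 edge_ne[OF g uvE] unfolding cond3_def
    by (simp add: insert_commute)
  have cvu: "col{v,u} = c" unfolding c_def by (rule cs)
  have "(p,v) \<in> A \<or> (v,p) \<in> A" using pvF fu unfolding full_def by blast
  then have "\<not> outok col A v c"
  proof
    assume "(p,v) \<in> A" then have "col{p,v} = c" using key by simp
    then show ?thesis using \<open>(p,v) \<in> A\<close> unfolding outok_def by blast
  next
    assume vp: "(v,p) \<in> A"
    then have "(p,v) \<notin> A" using no_both[OF nc] by blast
    then have "col{v,p} \<noteq> c" using key cs by metis
    then show ?thesis using vp unfolding outok_def by blast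
  qed
  then show ?thesis using vo cvu c_def by simp
qed


lemma add_edge:
  assumes g: "ecgraph V E" and c3: "cond3 V E col" and FE: "F \<subseteq> E" and eE: "e \<in> E" and eF: "e \<notin> F"
    and ao: "arcs_on F A" and fu: "full F A" and nc: "\<not> conflict col A"
  shows "\<exists>A'. arcs_on (insert e F) A' \<and> full (insert e F) A' \<and> \<not> conflict col A'"
proof -
  obtain u v where uv: "u \<noteq> v" "e = {u,v}" using g eE unfolding ecgraph_def by blast
  have uvE: "{u,v} \<in> E" using eE uv by simp
  have nF: "{u,v} \<notin> F" using eF uv by simp
  have uV: "u \<in> V" and vV: "v \<in> V" using edge_ne[OF g uvE] by auto
  define c where "c = col{u,v}"
  have cvu: "col{v,u} = c" unfolding c_def by (simp add: insert_commute)
  have vuE: "{v,u} \<in> E" using uvE by (simp add: insert_commute)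
  have ins: "insert {v,u} F = insert e F" using uv by (simp add: insert_commute)
  have cbu: "card (colors_at E col u) \<le> 2" using c3 uV unfolding cond3_def by blast
  have cbv: "card (colors_at E col v) \<le> 2" using c3 vV unfolding cond3_def by blast
  have vu: "outok col A u c \<or> inok col A u c" using vertex_ok[OF g nc ao FE uvE cbu] c_def by simp
  have vv: "outok col A v c \<or> inok col A v c" using vertex_ok[OF g nc ao FE vuE cbv] cvu by simp
  have fin1: "\<And>B. arcs_on F B \<Longrightarrow> full F B \<Longrightarrow> \<not> conflict col B \<Longrightarrow> outok col B u c \<Longrightarrow> inok col B v c
     \<Longrightarrow> \<exists>A'. arcs_on (insert e F) A' \<and> full (insert e F) A' \<and> \<not> conflict col A'"
    using finish_arc[of F _ col u v] uv c_def by blast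
  have fin2: "\<And>B. arcs_on F B \<Longrightarrow> full F B \<Longrightarrow> \<not> conflict col B \<Longrightarrow> outok col B v c \<Longrightarrow> inok col B u c
     \<Longrightarrow> \<exists>A'. arcs_on (insert e F) A' \<and> full (insert e F) A' \<and> \<not> conflict col A'"
  proof -
    fix B assume "arcs_on F B" "full F B" "\<not> conflict col B" "outok col B v c" "inok col B u c"
    then have "arcs_on (insert {v,u} F) (insert (v,u) B) \<and> full (insert {v,u} F) (insert (v,u) B)
     \<and> \<not> conflict col (insert (v,u) B)" using finish_arc[of F B col v u] uv cvu by simp
    then show "\<exists>A'. arcs_on (insert e F) A' \<and> full (insert e F) A' \<and> \<not> conflict col A'"
      unfolding ins by blast
  qed
  show ?thesis
  proof (cases "(u,v) \<in> (adjrel F)\<^sup>*")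
    case conn: True
    show ?thesis
    proof (cases "outok col A u c")
      case True
      then have "inok col A v c" using core_conn[OF g c3 FE uvE nF uv(1) ao fu nc conn] c_def by simp
      then show ?thesis using fin1[OF ao fu nc True] by blast
    next
      case False
      then have iu: "inok col A u c" using vu by blast
      define B where "B = flip (\<lambda>_. False) A"
      have cst: "\<forall>x y. {x,y} \<in> F \<longrightarrow> (\<lambda>_. False) x = (\<lambda>_. False) y" by simp
      have bp: "arcs_on F B" "full F B" "\<not> conflict col B" "\<forall>x y. (x,y) \<in> A \<longrightarrow> (\<lambda>_. False) x = (\<lambda>_. False) y"
        using flip_props[OF cst ao fu nc] unfolding B_def by auto
      have "outok col B u c" using flip_ok(1)[OF bp(4), of col u c] iu unfolding B_def by simp
      then have "inok col B v c" using core_conn[OF g c3 FE uvE nF uv(1) bp(1,2,3) conn] c_def by simp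
      then have "outok col A v c" using flip_ok(2)[OF bp(4), of col v c] unfolding B_def by simp
      then show ?thesis using fin2[OF ao fu nc _ iu] by blast
    qed
  next
    case nconn: False
    show ?thesis
    proof (cases "(outok col A u c \<and> inok col A v c) \<or> (inok col A u c \<and> outok col A v c)")
      case True then show ?thesis using fin1[OF ao fu nc] fin2[OF ao fu nc] by blast
    next
      case False
      define \<sigma> where "\<sigma> = (\<lambda>x. (v,x) \<notin> (adjrel F)\<^sup>*)"
      have cst: "\<forall>x y. {x,y} \<in> F \<longrightarrow> \<sigma> x = \<sigma> y"
      proof (intro allI impI)
        fix x y assume xy: "{x,y} \<in> F"
        then have "(x,y) \<in> adjrel F" "(y,x) \<in> adjrel F" by (simp_all add: adjrel_iff insert_commute)
        then show "\<sigma> x = \<sigma> y" unfolding \<sigma>_def by (meson rtrancl.rtrancl_into_rtrancl)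
      qed
      have symA: "(adjrel F)\<inverse> = adjrel F" unfolding adjrel_def by (auto simp: insert_commute)
      have su: "\<sigma> u"
      proof -
        have "(v,u) \<notin> (adjrel F)\<^sup>*"
        proof
          assume "(v,u) \<in> (adjrel F)\<^sup>*"
          then have "(u,v) \<in> ((adjrel F)\<inverse>)\<^sup>*" by (rule rtrancl_converseI)
          then show False using nconn symA by simp
        qed
        then show ?thesis unfolding \<sigma>_def by simp
      qed
      have sv: "\<not> \<sigma> v" unfolding \<sigma>_def by simp
      define B where "B = flip \<sigma> A"
      have bp: "arcs_on F B" "full F B" "\<not> conflict col B" "\<forall>x y. (x,y) \<in> A \<longrightarrow> \<sigma> x = \<sigma> y"
        using flip_props[OF cst ao fu nc] unfolding B_def by auto
      have bu1: "outok col B u c = outok col A u c" using flip_ok(1)[OF bp(4), of col u c] su unfolding B_def by simp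
      have bu2: "inok col B u c = inok col A u c" using flip_ok(2)[OF bp(4), of col u c] su unfolding B_def by simp
      have bv1: "outok col B v c = inok col A v c" using flip_ok(1)[OF bp(4), of col v c] sv unfolding B_def by simp
      have bv2: "inok col B v c = outok col A v c" using flip_ok(2)[OF bp(4), of col v c] sv unfolding B_def by simp
      from vu show ?thesis
      proof
        assume ou: "outok col A u c"
        then have "outok col A v c" using False vv by blast
        then show ?thesis using fin1[OF bp(1,2,3)] bu1 bv2 ou by blast
      next
        assume iu: "inok col A u c"
        then have "inok col A v c" using False vv by blast
        then show ?thesis using fin2[OF bp(1,2,3)] bu2 bv1 iu by blast
      qed
    qed
  qed
qed

lemma orient_exists:
  assumes g: "ecgraph V E" and c3: "cond3 V E col"
  shows "\<exists>A. arcs_on E A \<and> full E A \<and> \<not> conflict col A"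
proof -
  have "finite E" by (rule finite_E[OF g])
  moreover have "E \<subseteq> E" by simp
  ultimately show ?thesis
  proof (induction E rule: finite_subset_induct')
    case empty
    show ?case by (intro exI[of _ "{}"]) (simp add: arcs_on_def full_def conflict_def)
  next
    case (insert e F)
    then obtain A where "arcs_on F A" "full F A" "\<not> conflict col A" by blast
    then show ?case using add_edge[OF g c3 insert(3) insert(2) insert(4)] by blast
  qed
qed

lemma cond3_type5:
  assumes g: "ecgraph V E" and c3: "cond3 V E col"
  shows "pc_acyclic_type5 V E col"
proof -
  obtain A where A: "arcs_on E A" "full E A" "\<not> conflict col A" using orient_exists[OF g c3] by blast
  have "acyclic A" by (rule cond3_acyclic[OF g c3 A(1,3)])
  then show ?thesis using good_type5[OF g A] by blast
qed


definition binv :: "'a set \<Rightarrow> 'a set set \<Rightarrow> 'a set \<Rightarrow> ('a \<times> 'a) set \<Rightarrow> bool" where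
  "binv V E M A \<longleftrightarrow> arcs_on E A \<and> (\<forall>x y. (x,y) \<in> A \<longrightarrow> x \<in> M \<or> y \<in> M)
     \<and> (\<forall>x\<in>M. \<forall>w. {x,w} \<in> E \<longrightarrow> (x,w) \<in> A \<or> (w,x) \<in> A) \<and> M \<subseteq> V"

lemma orient_at_mem: "((p,q) \<in> orient_at E col y a out A) \<longleftrightarrow>
   ((p,q) \<in> A \<and> p \<noteq> y \<and> q \<noteq> y) \<or> (p = y \<and> {y,q} \<in> E \<and> (col{y,q} = a) = out)
   \<or> (q = y \<and> {y,p} \<in> E \<and> (col{y,p} = a) \<noteq> out)"
  unfolding orient_at_def by auto

lemma binv_step:
  assumes "binv V E M A" "y \<in> V"
  shows "binv V E (insert y M) (orient_at E col y a out A)"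
proof -
  have es: "\<And>x y. ({x,y} \<in> E) = ({y,x} \<in> E)" by (simp add: insert_commute)
  have cs: "\<And>x y. col{x,y} = col{y,x}" by (simp add: insert_commute)
  have b: "arcs_on E A" "\<forall>x y. (x,y) \<in> A \<longrightarrow> x \<in> M \<or> y \<in> M"
     "\<forall>x\<in>M. \<forall>w. {x,w} \<in> E \<longrightarrow> (x,w) \<in> A \<or> (w,x) \<in> A" "M \<subseteq> V"
    using assms(1) unfolding binv_def by auto
  let ?A = "orient_at E col y a out A"
  have c1: "arcs_on E ?A" unfolding arcs_on_def orient_at_mem
    using b(1) es unfolding arcs_on_def by blast
  have c2: "\<forall>x z. (x,z) \<in> ?A \<longrightarrow> x \<in> insert y M \<or> z \<in> insert y M"
    unfolding orient_at_mem using b(2) by blast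
  have yfull: "\<And>w. {y,w} \<in> E \<Longrightarrow> (y,w) \<in> ?A \<or> (w,y) \<in> ?A"
    unfolding orient_at_mem by blast
  have c3: "\<forall>x\<in>insert y M. \<forall>w. {x,w} \<in> E \<longrightarrow> (x,w) \<in> ?A \<or> (w,x) \<in> ?A"
  proof (intro ballI allI impI)
    fix x w assume x: "x \<in> insert y M" and e: "{x,w} \<in> E"
    show "(x,w) \<in> ?A \<or> (w,x) \<in> ?A"
    proof (cases "x = y")
      case True then show ?thesis using yfull e by blast
    next
      case False
      then have xM: "x \<in> M" using x by blast
      show ?thesis
      proof (cases "w = y")
        case True
        then have "{y,x} \<in> E" using e es by blast
        then show ?thesis using yfull True by blast
      next
        case False
        have "(x,w) \<in> A \<or> (w,x) \<in> A" using b(3) xM e by blast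
        then show ?thesis using False \<open>x \<noteq> y\<close> unfolding orient_at_mem by blast
      qed
    qed
  qed
  show ?thesis unfolding binv_def using c1 c2 c3 b(4) assms(2) by blast
qed

lemma reach_binv:
  assumes "orient_reach V E col S"
  shows "binv V E (fst S) (snd S)"
  using assms
proof (induction rule: orient_reach.induct)
  case init then show ?case unfolding binv_def arcs_on_def by simp
next
  case (start M Arcs x a out) then show ?case using binv_step by simp
next
  case (prop_in M Arcs y z) then show ?case using binv_step by simp
next
  case (prop_out M Arcs y z) then show ?case using binv_step by simp
qed


lemma orient_sub:
  assumes fu: "full E F'" and nc: "\<not> conflict col F'" and sub: "A \<subseteq> F'"
    and cond: "\<And>w. {y,w} \<in> E \<Longrightarrow> ((y,w) \<in> F') = ((col{y,w} = a) = out)"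
  shows "orient_at E col y a out A \<subseteq> F'"
proof
  fix pq assume "pq \<in> orient_at E col y a out A"
  then obtain p q where pq: "pq = (p,q)" and m: "(p,q) \<in> orient_at E col y a out A" by (cases pq) auto
  from m[unfolded orient_at_mem] have "pq \<in> F'"
  proof (elim disjE conjE)
    assume "(p,q) \<in> A" then show ?thesis using sub pq by blast
  next
    assume "p = y" "{y,q} \<in> E" "(col{y,q} = a) = out"
    then show ?thesis using cond pq by blast
  next
    assume a: "q = y" "{y,p} \<in> E" "(col{y,p} = a) \<noteq> out"
    then have "(y,p) \<notin> F'" using cond by blast
    moreover have "(y,p) \<in> F' \<or> (p,y) \<in> F'" using a(2) fu unfolding full_def by blast
    ultimately show ?thesis using pq a(1) by blast
  qed
  then show "pq \<in> F'" .
qed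

lemma reach_sigma:
  assumes g: "ecgraph V E" and Oa: "arcs_on E O'" and Of: "full E O'" and Oc: "\<not> conflict col O'"
    and r: "orient_reach V E col S"
  shows "\<exists>\<sigma>. (\<forall>x y. {x,y} \<in> E \<longrightarrow> \<sigma> x = \<sigma> y) \<and> snd S \<subseteq> flip \<sigma> O'"
  using r
proof (induction rule: orient_reach.induct)
  case init then show ?case by (intro exI[of _ "\<lambda>_. True"]) simp
next
  case (start M Arcs x a out)
  obtain \<sigma> where \<sigma>: "\<forall>x y. {x,y} \<in> E \<longrightarrow> \<sigma> x = \<sigma> y" "Arcs \<subseteq> flip \<sigma> O'" using start.IH by auto
  have bi: "binv V E M Arcs" using reach_binv[OF start.hyps(1)] by simp
  have cs: "\<And>x y. col{x,y} = col{y,x}" by (simp add: insert_commute)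
  have es: "\<And>x y. ({x,y} \<in> E) = ({y,x} \<in> E)" by (simp add: insert_commute)
  show ?case
  proof (cases "colors_at E col x = {}")
    case True
    have noe: "\<And>w. {x,w} \<notin> E"
    proof
      fix w assume "{x,w} \<in> E"
      then have "col{x,w} \<in> colors_at E col x" by (rule in_colors_at) simp
      then show False using True by simp
    qed
    have fp: "arcs_on E (flip \<sigma> O') \<and> full E (flip \<sigma> O') \<and> \<not> conflict col (flip \<sigma> O')
       \<and> (\<forall>x y. (x,y) \<in> O' \<longrightarrow> \<sigma> x = \<sigma> y)" by (rule flip_props[OF \<sigma>(1) Oa Of Oc])
    have "orient_at E col x a out Arcs \<subseteq> flip \<sigma> O'"
      by (rule orient_sub) (use fp \<sigma>(2) noe in auto)
    then show ?thesis using \<sigma>(1) by auto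
  next
    case False
    then have "a \<in> colors_at E col x" using start.hyps(6) by blast
    then obtain e0 where e0: "e0 \<in> E" "x \<in> e0" "col e0 = a" unfolding colors_at_def by auto
    then obtain w0 where w0: "e0 = {x,w0}" using edge_cases[OF g] by blast
    have xw0: "{x,w0} \<in> E" "col{x,w0} = a" using e0 w0 by auto
    define R where "R = {z. (x,z) \<in> (adjrel E)\<^sup>*}"
    have Rcl: "\<And>p q. {p,q} \<in> E \<Longrightarrow> (p \<in> R) = (q \<in> R)"
    proof -
      fix p q assume "{p,q} \<in> E"
      then have a1: "(p,q) \<in> adjrel E" and a2: "(q,p) \<in> adjrel E" by (simp_all add: adjrel_iff insert_commute)
      show "(p \<in> R) = (q \<in> R)" unfolding R_def mem_Collect_eq
        using rtrancl_into_rtrancl[of x p "adjrel E" q] rtrancl_into_rtrancl[of x q "adjrel E" p] a1 a2 by blast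
    qed
    have xR: "x \<in> R" unfolding R_def by simp
    have MR: "\<And>z. z \<in> M \<Longrightarrow> z \<notin> R" using start.hyps(5) unfolding R_def by blast
    define s where "s = (((x,w0) \<in> O') = out)"
    define \<sigma>' where "\<sigma>' = (\<lambda>z. if z \<in> R then s else \<sigma> z)"
    have \<sigma>'c: "\<forall>p q. {p,q} \<in> E \<longrightarrow> \<sigma>' p = \<sigma>' q"
      unfolding \<sigma>'_def using \<sigma>(1) Rcl by auto
    have fp: "arcs_on E (flip \<sigma>' O') \<and> full E (flip \<sigma>' O') \<and> \<not> conflict col (flip \<sigma>' O')
       \<and> (\<forall>x y. (x,y) \<in> O' \<longrightarrow> \<sigma>' x = \<sigma>' y)" by (rule flip_props[OF \<sigma>'c Oa Of Oc])
    have sub: "Arcs \<subseteq> flip \<sigma>' O'"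
    proof
      fix pq assume pqA: "pq \<in> Arcs"
      then obtain p q where pq: "pq = (p,q)" by (cases pq) auto
      have pqA': "(p,q) \<in> Arcs" using pqA pq by simp
      have "{p,q} \<in> E" using bi pqA' unfolding binv_def arcs_on_def by blast
      moreover have "p \<in> M \<or> q \<in> M" using bi pqA' unfolding binv_def by blast
      ultimately have "p \<notin> R" using MR Rcl by blast
      then have "\<sigma>' p = \<sigma> p" unfolding \<sigma>'_def by simp
      moreover have "(p,q) \<in> flip \<sigma> O'" using \<sigma>(2) pqA' by blast
      ultimately show "pq \<in> flip \<sigma>' O'" unfolding flip_def pq by simp
    qed
    have cond: "\<And>w. {x,w} \<in> E \<Longrightarrow> ((x,w) \<in> flip \<sigma>' O') = ((col{x,w} = a) = out)"
    proof -
      fix w assume xw: "{x,w} \<in> E"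
      have "((x,w) \<in> flip \<sigma>' O') = (if \<sigma>' x then (x,w) \<in> O' else (w,x) \<in> O')"
        using flip_at(2)[of O' \<sigma>' x w] fp by blast
      also have "\<dots> = (if s then (x,w) \<in> O' else (w,x) \<in> O')" unfolding \<sigma>'_def using xR by simp
      finally have f1: "((x,w) \<in> flip \<sigma>' O') = (if s then (x,w) \<in> O' else (w,x) \<in> O')" .
      have o1: "(x,w) \<in> O' \<or> (w,x) \<in> O'" using xw Of unfolding full_def by blast
      have o2: "(x,w0) \<in> O' \<or> (w0,x) \<in> O'" using xw0(1) Of unfolding full_def by blast
      have wx: "((w,x) \<in> O') = ((x,w) \<notin> O')" using o1 no_both[OF Oc] by blast
      have d: "(((x,w) \<in> O') = ((x,w0) \<in> O')) = (col{x,w} = col{x,w0})"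
        by (rule dir_at[OF Oc o1 o2])
      show "((x,w) \<in> flip \<sigma>' O') = ((col{x,w} = a) = out)"
        unfolding f1 wx s_def using d xw0(2) by auto
    qed
    have "orient_at E col x a out Arcs \<subseteq> flip \<sigma>' O'"
      by (rule orient_sub) (use fp sub cond in auto)
    then show ?thesis using \<sigma>'c by auto
  qed
next
  case (prop_in M Arcs y z)
  obtain \<sigma> where \<sigma>: "\<forall>x y. {x,y} \<in> E \<longrightarrow> \<sigma> x = \<sigma> y" "Arcs \<subseteq> flip \<sigma> O'" using prop_in.IH by auto
  have fp: "arcs_on E (flip \<sigma> O') \<and> full E (flip \<sigma> O') \<and> \<not> conflict col (flip \<sigma> O')
       \<and> (\<forall>x y. (x,y) \<in> O' \<longrightarrow> \<sigma> x = \<sigma> y)" by (rule flip_props[OF \<sigma>(1) Oa Of Oc])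
  let ?F = "flip \<sigma> O'"
  have zy: "(z,y) \<in> ?F" using prop_in.hyps(5) \<sigma>(2) by blast
  have ncF: "\<not> conflict col ?F" using fp by blast
  have yz: "(y,z) \<notin> ?F" using no_both[OF ncF, of y z] zy by blast
  have cond: "\<And>w. {y,w} \<in> E \<Longrightarrow> ((y,w) \<in> ?F) = ((col{y,w} = col{z,y}) = False)"
  proof -
    fix w assume yw: "{y,w} \<in> E"
    have o1: "(y,w) \<in> ?F \<or> (w,y) \<in> ?F" using yw fp unfolding full_def by blast
    have o2: "(y,z) \<in> ?F \<or> (z,y) \<in> ?F" using zy by blast
    have d: "(((y,w) \<in> ?F) = ((y,z) \<in> ?F)) = (col{y,w} = col{y,z})"
      by (rule dir_at[OF ncF o1 o2])
    moreover have "col{z,y} = col{y,z}" by (simp add: insert_commute)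
    ultimately show "((y,w) \<in> ?F) = ((col{y,w} = col{z,y}) = False)" using yz by auto
  qed
  have "orient_at E col y (col{z,y}) False Arcs \<subseteq> ?F"
    by (rule orient_sub) (use fp \<sigma>(2) cond in auto)
  then show ?case using \<sigma>(1) by auto
next
  case (prop_out M Arcs y z)
  obtain \<sigma> where \<sigma>: "\<forall>x y. {x,y} \<in> E \<longrightarrow> \<sigma> x = \<sigma> y" "Arcs \<subseteq> flip \<sigma> O'" using prop_out.IH by auto
  have fp: "arcs_on E (flip \<sigma> O') \<and> full E (flip \<sigma> O') \<and> \<not> conflict col (flip \<sigma> O')
       \<and> (\<forall>x y. (x,y) \<in> O' \<longrightarrow> \<sigma> x = \<sigma> y)" by (rule flip_props[OF \<sigma>(1) Oa Of Oc])
  let ?F = "flip \<sigma> O'"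
  have yz: "(y,z) \<in> ?F" using prop_out.hyps(5) \<sigma>(2) by blast
  have ncF: "\<not> conflict col ?F" using fp by blast
  have cond: "\<And>w. {y,w} \<in> E \<Longrightarrow> ((y,w) \<in> ?F) = ((col{y,w} = col{y,z}) = True)"
  proof -
    fix w assume yw: "{y,w} \<in> E"
    have o1: "(y,w) \<in> ?F \<or> (w,y) \<in> ?F" using yw fp unfolding full_def by blast
    have o2: "(y,z) \<in> ?F \<or> (z,y) \<in> ?F" using yz by blast
    have d: "(((y,w) \<in> ?F) = ((y,z) \<in> ?F)) = (col{y,w} = col{y,z})"
      by (rule dir_at[OF ncF o1 o2])
    then show "((y,w) \<in> ?F) = ((col{y,w} = col{y,z}) = True)" using yz by simp
  qed
  have "orient_at E col y (col{y,z}) True Arcs \<subseteq> ?F"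
    by (rule orient_sub) (use fp \<sigma>(2) cond in auto)
  then show ?case using \<sigma>(1) by auto
qed


lemma conflict_mono: "A \<subseteq> B \<Longrightarrow> \<not> conflict col B \<Longrightarrow> \<not> conflict col A"
  unfolding conflict_def by (meson subsetD)

lemma path_to_marked:
  assumes "(x,v) \<in> R\<^sup>*" "x \<notin> M" "v \<in> M"
  shows "\<exists>y m. y \<notin> M \<and> m \<in> M \<and> (y,m) \<in> R"
  using assms
proof (induction rule: rtrancl_induct)
  case base then show ?case by blast
next
  case (step b c)
  show ?case
  proof (cases "b \<in> M")
    case True then show ?thesis using step.IH step.prems(1) by blast
  next
    case False then show ?thesis using step.hyps(2) step.prems(2) by blast
  qed
qed

lemma run_exists:
  assumes g: "ecgraph V E" and ncall: "\<forall>M A. orient_reach V E col (M,A) \<longrightarrow> \<not> conflict col A"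
  shows "\<exists>M A. orient_reach V E col (M,A) \<and> all_oriented E A"
proof -
  have fV: "finite V" using g unfolding ecgraph_def by simp
  have main: "\<And>M A. orient_reach V E col (M,A) \<Longrightarrow> \<exists>A'. orient_reach V E col (V,A')"
  proof -
    fix M A assume r: "orient_reach V E col (M,A)"
    define k where "k = card (V - M)"
    show "\<exists>A'. orient_reach V E col (V,A')" using k_def r
    proof (induction k arbitrary: M A rule: less_induct)
      case (less k M A)
      have bi: "binv V E M A" using reach_binv[OF less.prems(2)] by simp
      have MV: "M \<subseteq> V" using bi unfolding binv_def by blast
      have ncA: "\<not> conflict col A" using ncall less.prems(2) by blast
      show ?case
      proof (cases "M = V")
        case True then show ?thesis using less.prems(2) by blast
      next
        case False
        then obtain x where x: "x \<in> V" "x \<notin> M" using MV by blast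
        have "\<exists>y A'. y \<in> V \<and> y \<notin> M \<and> orient_reach V E col (insert y M, A')"
        proof (cases "\<exists>v. (x,v) \<in> (adjrel E)\<^sup>* \<and> v \<in> M")
          case True
          then obtain v where "(x,v) \<in> (adjrel E)\<^sup>*" "v \<in> M" by blast
          then obtain y m where ym: "y \<notin> M" "m \<in> M" "(y,m) \<in> adjrel E" using path_to_marked x(2) by metis
          have yme: "{y,m} \<in> E" using ym(3) by (simp add: adjrel_iff)
          then have myE: "{m,y} \<in> E" by (simp add: insert_commute)
          have yV: "y \<in> V" using edge_ne[OF g yme] by simp
          have "(m,y) \<in> A \<or> (y,m) \<in> A" using bi ym(2) myE unfolding binv_def by blast
          then show ?thesis
          proof
            assume "(m,y) \<in> A"
            then have "orient_reach V E col (insert y M, orient_at E col y (col {m, y}) False A)"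
              by (rule orient_reach.prop_in[OF less.prems(2) ncA yV ym(1)])
            then show ?thesis using yV ym(1) by blast
          next
            assume "(y,m) \<in> A"
            then have "orient_reach V E col (insert y M, orient_at E col y (col {y, m}) True A)"
              by (rule orient_reach.prop_out[OF less.prems(2) ncA yV ym(1)])
            then show ?thesis using yV ym(1) by blast
          qed
        next
          case False
          then have nv: "\<forall>v. (x,v) \<in> (adjrel E)\<^sup>* \<longrightarrow> v \<notin> M" by blast
          obtain a where a: "a \<in> colors_at E col x \<or> colors_at E col x = {}" by blast
          have "orient_reach V E col (insert x M, orient_at E col x a True A)"
            by (rule orient_reach.start[OF less.prems(2) ncA x(1) x(2) nv a])
          then show ?thesis using x by blast
        qed
        then obtain y A' where y: "y \<in> V" "y \<notin> M" "orient_reach V E col (insert y M, A')" by blast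
        have "V - insert y M = (V - M) - {y}" by blast
        moreover have "card ((V - M) - {y}) < card (V - M)"
          using y(1,2) fV by (intro card_Diff1_less) auto
        ultimately have "card (V - insert y M) < k" using less.prems(1) by simp
        then show ?thesis using less.IH y(3) by blast
      qed
    qed
  qed
  obtain A where r: "orient_reach V E col (V,A)" using main[OF orient_reach.init] by blast
  have bi: "binv V E V A" using reach_binv[OF r] by simp
  have "all_oriented E A" unfolding all_oriented_def
  proof
    fix e assume e: "e \<in> E"
    then obtain u w where uw: "u \<noteq> w" "u \<in> V" "w \<in> V" "e = {u,w}" using g unfolding ecgraph_def by blast
    then have "(u,w) \<in> A \<or> (w,u) \<in> A" using bi e unfolding binv_def by blast
    then show "\<exists>u w. e = {u, w} \<and> (u, w) \<in> A"
    proof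
      assume "(u,w) \<in> A" then show ?thesis using uw by blast
    next
      assume "(w,u) \<in> A" then show ?thesis using uw by (intro exI[of _ w] exI[of _ u]) (simp add: insert_commute)
    qed
  qed
  then show ?thesis using r by blast
qed

lemma all_oriented_full: "all_oriented E A \<Longrightarrow> full E A"
  unfolding all_oriented_def full_def
proof (intro allI impI)
  fix x y assume a: "\<forall>e\<in>E. \<exists>u w. e = {u, w} \<and> (u, w) \<in> A" and e: "{x,y} \<in> E"
  then obtain u w where uw: "{x,y} = {u,w}" "(u,w) \<in> A" by blast
  then have "(x = u \<and> y = w) \<or> (x = w \<and> y = u)" by (simp add: doubleton_eq_iff)
  then show "(x,y) \<in> A \<or> (y,x) \<in> A" using uw(2) by blast
qed

lemma type5_cond3:
  assumes g: "ecgraph V E" and t: "pc_acyclic_type5 V E col"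
  shows "cond3 V E col"
proof -
  obtain vs where "type5_ordering V E col vs" using t unfolding pc_acyclic_type5_def by blast
  from type5_good[OF g this] show ?thesis using good_cond3[OF g] by blast
qed

lemma type5_all:
  assumes g: "ecgraph V E" and t: "pc_acyclic_type5 V E col"
  shows "proc_ok_all V E col"
proof -
  have c3: "cond3 V E col" by (rule type5_cond3[OF g t])
  obtain vs where "type5_ordering V E col vs" using t unfolding pc_acyclic_type5_def by blast
  define O' where "O' = {(x,y). {x,y}\<in>E \<and> pos vs x < pos vs y}"
  have Op: "arcs_on E O'" "full E O'" "\<not> conflict col O'"
    using type5_good[OF g \<open>type5_ordering V E col vs\<close>] unfolding O'_def by auto
  have ncall: "\<forall>M A. orient_reach V E col (M,A) \<longrightarrow> \<not> conflict col A"
  proof (intro allI impI)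
    fix M A assume r: "orient_reach V E col (M,A)"
    obtain \<sigma> where \<sigma>: "\<forall>x y. {x,y} \<in> E \<longrightarrow> \<sigma> x = \<sigma> y" "A \<subseteq> flip \<sigma> O'"
      using reach_sigma[OF g Op r] by auto
    have "\<not> conflict col (flip \<sigma> O')" using flip_props[OF \<sigma>(1) Op] by blast
    then show "\<not> conflict col A" by (rule conflict_mono[OF \<sigma>(2)])
  qed
  have acy: "\<forall>M A. orient_reach V E col (M,A) \<and> all_oriented E A \<longrightarrow> acyclic A"
  proof (intro allI impI)
    fix M A assume r: "orient_reach V E col (M,A) \<and> all_oriented E A"
    have "arcs_on E A" using reach_binv[of V E col "(M,A)"] r unfolding binv_def by simp
    moreover have "\<not> conflict col A" using ncall r by blast
    ultimately show "acyclic A" by (rule cond3_acyclic[OF g c3])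
  qed
  show ?thesis unfolding proc_ok_all_def
    using c3 ncall acy run_exists[OF g ncall] unfolding cond3_def by blast
qed

lemma all_some: "proc_ok_all V E col \<Longrightarrow> proc_ok_some V E col"
  unfolding proc_ok_all_def proc_ok_some_def by blast

lemma some_type5:
  assumes g: "ecgraph V E" and p: "proc_ok_some V E col"
  shows "pc_acyclic_type5 V E col"
proof -
  obtain M A where r: "orient_reach V E col (M, A)" and h: "\<not> conflict col A" "all_oriented E A" "acyclic A"
    using p unfolding proc_ok_some_def by blast
  have "arcs_on E A" using reach_binv[OF r] unfolding binv_def by simp
  then show ?thesis using good_type5[OF g _ all_oriented_full[OF h(2)] h(1) h(3)] by blast
qed

theorem theorem5:
  fixes V :: "'a set" and E :: "'a set set" and col :: "'a set \<Rightarrow> 'c"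
  assumes "ecgraph V E"
  shows "(pc_acyclic_type5 V E col \<longleftrightarrow> proc_ok_some V E col) \<and>
         (pc_acyclic_type5 V E col \<longleftrightarrow> proc_ok_all V E col) \<and>
         (pc_acyclic_type5 V E col \<longleftrightarrow> cond3 V E col)"
  using type5_all[OF assms] all_some some_type5[OF assms] type5_cond3[OF assms] cond3_type5[OF assms]
  by blast

end
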